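(* Let $\rho>0$ and $y\in\mathbb{R}^n$. There exists a neighborhood $\mathcal Y$ of $y$ such that for all $u\in\mathcal Y$: \[ \mathcal K_{\mathcal D}(P_yu-\rho w)\subseteq\mathcal K_{\mathcal D}(P_yy-\rho w),\quad \mathcal Q_{\mathcal D}(P_yu-\rho w)\subseteq\mathcal Q_{\mathcal D}(P_yy-\rho w),\quad \mathcal Q_{S_\rho}(u)\subseteq\mathcal Q_{S_\rho}(y), \] and \[ \Pi_{\mathcal D}(P_yu-\rho w)=\Pi_{\mathcal D}(P_yy-\rho w)+\widehat Q P_y(u-y)\ \ \forall \widehat Q\in\mathcal Q_{\mathcal D}(P_yu-\rho w), \qquad S_\rho(u)=S_\rho(y)+Q(u-y)\ \ \forall Q\in\mathcal Q_{S_\rho}(u). \]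
   Context: $w\in\mathbb{R}^n$, $w_k=n-2k+1$. $\mathcal D:=\{x\in\mathbb{R}^n: x_1\ge\cdots\ge x_n\}$, $\Pi_{\mathcal D}$ the Euclidean projection onto $\mathcal D$. $B\in\mathbb{R}^{(n-1)\times n}$ with $Bx=(x_1-x_2,\dots,x_{n-1}-x_n)^T$; $B_i$ its $i$-th row and $B_K$ the rows indexed by $K$. $S_\rho(y):=\operatorname{argmin}_x\{\tfrac12\|x-y\|^2+\rho\sum_{i<j}|x_i-x_j|\}$. For each $y\in\mathbb{R}^n$, $P_y$ is a fixed permutation matrix such that $P_yy$ has non-increasing components. For $v\in\mathbb{R}^n$: $\mathcal M_{\mathcal D}(v)$ is the set of $\lambda\in\mathbb{R}^{n-1}$ with $\Pi_{\mathcal D}(v)-v+B^T\lambda=0$, $B\Pi_{\mathcal D}(v)\ge0$, $\lambda\le0$, $\lambda^TB\Pi_{\mathcal D}(v)=0$; $\mathcal I_{\mathcal D}(v):=\{i\in\{1,\dots,n-1\}: B_i\Pi_{\mathcal D}(v)=0\}$; $\mathcal K_{\mathcal D}(v):=\{K\subseteq\{1,\dots,n-1\}: \exists\lambda\in\mathcal M_{\mathcal D}(v)\text{ with }\mathrm{supp}(\lambda)\subseteq K\subseteq\mathcal I_{\mathcal D}(v),\ B_K\text{ has full row rank}\}$; $\mathcal Q_{\mathcal D}(v):=\{I_n-B_K^T(B_KB_K^T)^{-1}B_K: K\in\mathcal K_{\mathcal D}(v)\}$. Finally $\mathcal Q_{S_\rho}(y):=\{P_y^T\widehat QP_y:\widehat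 Q\in\mathcal Q_{\mathcal D}(P_yy-\rho w)\}$. *)

theory Defs
  imports "Jordan_Normal_Form.DL_Rank" "Jordan_Normal_Form.DL_Submatrix"
    "Jordan_Normal_Form.Gauss_Jordan_Elimination"
begin

text \<open>Vectors in R^n are JNF vectors in carrier_vec n, indexed 0..n-1
  (paper index k corresponds to index k-1 here).\<close>

definition vnorm :: "real vec \<Rightarrow> real" where
  "vnorm v = sqrt (v \<bullet> v)"

definition Dset :: "nat \<Rightarrow> real vec set" where
  "Dset n = {x \<in> carrier_vec n. \<forall>i. i + 1 < n \<longrightarrow> x $ (i + 1) \<le> x $ i}"

definition projD :: "nat \<Rightarrow> real vec \<Rightarrow> real vec" where
  "projD n v = (THE x. x \<in> Dset n \<and> (\<forall>z \<in> Dset n. vnorm (x - v) \<le> vnorm (z - v)))"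

text \<open>w_k = n - 2k + 1 for k = 1..n, i.e. w_i = n - 2i - 1 for 0-based i.\<close>
definition wvec :: "nat \<Rightarrow> real vec" where
  "wvec n = vec n (\<lambda>i. real n - 2 * real i - 1)"

definition Bmat :: "nat \<Rightarrow> real mat" where
  "Bmat n = mat (n - 1) n (\<lambda>(i, j). if j = i then 1 else if j = i + 1 then -1 else 0)"

definition BK :: "nat \<Rightarrow> nat set \<Rightarrow> real mat" where
  "BK n K = submatrix (Bmat n) K UNIV"

definition full_row_rank :: "real mat \<Rightarrow> bool" where
  "full_row_rank A \<longleftrightarrow> vec_space.rank (dim_row A) (A :: real mat) = dim_row A"

definition Sobj :: "nat \<Rightarrow> real \<Rightarrow> real vec \<Rightarrow> real vec \<Rightarrow> real" where
  "Sobj n \<rho> y x = (vnorm (x - y))\<^sup>2 / 2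
     + \<rho> * (\<Sum>j<n. \<Sum>i<j. \<bar>x $ i - x $ j\<bar>)"

definition Srho :: "nat \<Rightarrow> real \<Rightarrow> real vec \<Rightarrow> real vec" where
  "Srho n \<rho> y = (THE x. x \<in> carrier_vec n \<and> (\<forall>z \<in> carrier_vec n. Sobj n \<rho> y x \<le> Sobj n \<rho> y z))"

definition perm_matrix :: "nat \<Rightarrow> real mat \<Rightarrow> bool" where
  "perm_matrix n P \<longleftrightarrow>
     (\<exists>\<sigma>. \<sigma> permutes {..<n} \<and> P = mat n n (\<lambda>(i, j). if \<sigma> i = j then 1 else 0))"

definition MD :: "nat \<Rightarrow> real vec \<Rightarrow> real vec set" where
  "MD n v = {lam \<in> carrier_vec (n - 1).
      projD n v - v + (transpose_mat (Bmat n) *\<^sub>v lam) = 0\<^sub>v n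
    \<and> (\<forall>i < n - 1. (Bmat n *\<^sub>v projD n v) $ i \<ge> 0)
    \<and> (\<forall>i < n - 1. lam $ i \<le> 0)
    \<and> lam \<bullet> (Bmat n *\<^sub>v projD n v) = 0}"

definition ID :: "nat \<Rightarrow> real vec \<Rightarrow> nat set" where
  "ID n v = {i. i < n - 1 \<and> (Bmat n *\<^sub>v projD n v) $ i = 0}"

definition vsupp :: "real vec \<Rightarrow> nat set" where
  "vsupp lam = {i. i < dim_vec lam \<and> lam $ i \<noteq> 0}"

definition KD :: "nat \<Rightarrow> real vec \<Rightarrow> nat set set" where
  "KD n v = {K. (\<exists>lam \<in> MD n v. vsupp lam \<subseteq> K) \<and> K \<subseteq> ID n v \<and> full_row_rank (BK n K)}"

definition QD :: "nat \<Rightarrow> real vec \<Rightarrow> real mat set" where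
  "QD n v = {1\<^sub>m n - transpose_mat (BK n K) * the (mat_inverse (BK n K * transpose_mat (BK n K))) * BK n K
             | K. K \<in> KD n v}"

text \<open>P is the fixed choice y |-> P_y of sorting permutation matrices.\<close>
definition QS :: "nat \<Rightarrow> real \<Rightarrow> (real vec \<Rightarrow> real mat) \<Rightarrow> real vec \<Rightarrow> real mat set" where
  "QS n \<rho> P y = {transpose_mat (P y) * Qh * P y | Qh. Qh \<in> QD n (P y *\<^sub>v y - \<rho> \<cdot>\<^sub>v wvec n)}"

end

theory Submission
  imports Defs
begin

lemma sum_split_shift:
  fixes f :: "nat \<Rightarrow> real"
  shows "(\<Sum>j<a+b. f j) = (\<Sum>j<a. f j) + (\<Sum>j<b. f (j + a))"
  by (induction b) (auto simp: add.commute)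

lemma sum_by_parts:
  fixes a d :: "nat \<Rightarrow> real"
  shows "(\<Sum>i<Suc n. a i * d i) = (\<Sum>k<n. (\<Sum>j<Suc k. d j) * (a k - a (Suc k))) + (\<Sum>j<Suc n. d j) * a n"
proof (induction n)
  case 0 then show ?case by simp
next
  case (Suc n)
  have "(\<Sum>i<Suc (Suc n). a i * d i) = (\<Sum>i<Suc n. a i * d i) + a (Suc n) * d (Suc n)" by simp
  also have "\<dots> = (\<Sum>k<n. (\<Sum>j<Suc k. d j) * (a k - a (Suc k))) + (\<Sum>j<Suc n. d j) * a n + a (Suc n) * d (Suc n)"
    using Suc by simp
  also have "\<dots> = (\<Sum>k<Suc n. (\<Sum>j<Suc k. d j) * (a k - a (Suc k))) + (\<Sum>j<Suc (Suc n). d j) * a (Suc n)"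
    by (simp add: algebra_simps)
  finally show ?case .
qed

lemma pav:
  fixes v :: "nat \<Rightarrow> real"
  assumes "0 < n"
  shows "\<exists>x::nat\<Rightarrow>real. (\<forall>i. Suc i < n \<longrightarrow> x (Suc i) \<le> x i)
    \<and> (\<forall>k<n. (\<Sum>j<Suc k. v j - x j) \<le> 0) \<and> (\<Sum>j<n. v j - x j) = 0
    \<and> (\<forall>k. Suc k < n \<longrightarrow> x (Suc k) < x k \<longrightarrow> (\<Sum>j<Suc k. v j - x j) = 0)
    \<and> (\<forall>c. (\<forall>k\<in>{1..n}. (\<Sum>j<k. v j) \<le> real k * c) \<longrightarrow> x 0 \<le> c)"
  using assms
proof (induction n arbitrary: v rule: less_induct)
  case (less n)
  define R where "R = (\<lambda>k. (\<Sum>j<k. v j) / real k)"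
  define M where "M = Max (R ` {1..n})"
  have fin: "finite (R ` {1..n})" and ne: "R ` {1..n} \<noteq> {}" using less.prems by auto
  obtain k0 where k0: "k0 \<in> {1..n}" "R k0 = M" using Max_in[OF fin ne] unfolding M_def by auto
  have hk: "(\<Sum>j<k. v j) \<le> real k * M" if "k \<in> {1..n}" for k
  proof -
    have "R k \<le> M" unfolding M_def using fin that by auto
    then show ?thesis using that unfolding R_def by (simp add: divide_le_eq mult.commute)
  qed
  have h0: "(\<Sum>j<k0. v j) = real k0 * M" using k0 unfolding R_def by auto
  have Mc: "M \<le> c" if "\<forall>k\<in>{1..n}. (\<Sum>j<k. v j) \<le> real k * c" for c
  proof -
    have "real k0 * M \<le> real k0 * c" using bspec[OF that k0(1)] h0 by simp
    then show ?thesis using k0(1) by auto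
  qed
  have hsum: "(\<Sum>j<k. v j - M) = (\<Sum>j<k. v j) - real k * M" for k by (simp add: sum_subtractf)
  show ?case
  proof (cases "k0 = n")
    case True
    show ?thesis
    proof (intro exI[of _ "\<lambda>_. M"] conjI allI impI)
      fix k assume "k < n"
      then show "(\<Sum>j<Suc k. v j - M) \<le> 0" using hk[of "Suc k"] hsum[of "Suc k"] by simp
    next
      show "(\<Sum>j<n. v j - M) = 0" using hsum[of n] h0 True by simp
    next
      fix c assume "\<forall>k\<in>{1..n}. (\<Sum>j<k. v j) \<le> real k * c"
      then show "M \<le> c" using Mc by blast
    qed auto
  next
    case False
    define n' where "n' = n - k0"
    define v' where "v' = (\<lambda>j. v (j + k0))"
    have n'pos: "0 < n'" "n' < n" and nn: "n = k0 + n'" using k0 False unfolding n'_def by auto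
    obtain x' where x': "\<forall>i. Suc i < n' \<longrightarrow> x' (Suc i) \<le> x' i"
      "\<forall>k<n'. (\<Sum>j<Suc k. v' j - x' j) \<le> 0" "(\<Sum>j<n'. v' j - x' j) = 0"
      "\<forall>k. Suc k < n' \<longrightarrow> x' (Suc k) < x' k \<longrightarrow> (\<Sum>j<Suc k. v' j - x' j) = 0"
      "\<forall>c. (\<forall>k\<in>{1..n'}. (\<Sum>j<k. v' j) \<le> real k * c) \<longrightarrow> x' 0 \<le> c"
      using less.IH[OF n'pos(2) n'pos(1), of v'] by blast
    have "x' 0 \<le> M"
    proof -
      have "(\<Sum>j<k. v' j) \<le> real k * M" if "k \<in> {1..n'}" for k
      proof -
        have "(\<Sum>j<k0+k. v j) = (\<Sum>j<k0. v j) + (\<Sum>j<k. v' j)"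
          unfolding v'_def by (rule sum_split_shift)
        moreover have "(\<Sum>j<k0+k. v j) \<le> real (k0+k) * M" using hk[of "k0+k"] that nn by auto
        ultimately show ?thesis using h0 by (simp add: algebra_simps)
      qed
      then show ?thesis using x'(5) by blast
    qed
    define x where "x = (\<lambda>j. if j < k0 then M else x' (j - k0))"
    have split: "(\<Sum>j<Suc k. v j - x j) = (\<Sum>j<Suc (k - k0). v' j - x' j)" if "k0 \<le> k" for k
    proof -
      have "(\<Sum>j<Suc k. v j - x j) = (\<Sum>j<k0. v j - x j) + (\<Sum>j<Suc (k - k0). v (j + k0) - x (j + k0))"
        using sum_split_shift[of "\<lambda>j. v j - x j" k0 "Suc (k - k0)"] that
        by (simp add: Suc_diff_le)
      also have "(\<Sum>j<k0. v j - x j) = (\<Sum>j<k0. v j - M)" unfolding x_def by simp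
      also have "\<dots> = 0" using hsum[of k0] h0 by simp
      finally show ?thesis unfolding x_def v'_def by simp
    qed
    show ?thesis
    proof (intro exI[of _ x] conjI allI impI)
      fix i assume i: "Suc i < n"
      show "x (Suc i) \<le> x i"
      proof (cases "Suc i < k0")
        case True then show ?thesis unfolding x_def by simp
      next
        case F: False
        show ?thesis
        proof (cases "Suc i = k0")
          case True then show ?thesis unfolding x_def using \<open>x' 0 \<le> M\<close> by simp
        next
          case False
          then have "k0 \<le> i" using F by simp
          then have "Suc (i - k0) < n'" using i nn by simp
          then show ?thesis using x'(1) \<open>k0 \<le> i\<close> unfolding x_def by (simp add: Suc_diff_le)
        qed
      qed
    next
      fix k assume k: "k < n"
      show "(\<Sum>j<Suc k. v j - x j) \<le> 0"
      proof (cases "k < k0")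
        case True
        then have "(\<Sum>j<Suc k. v j - x j) = (\<Sum>j<Suc k. v j - M)" unfolding x_def by simp
        then show ?thesis using hk[of "Suc k"] hsum[of "Suc k"] True k0 by simp
      next
        case False
        then show ?thesis using split[of k] x'(2) k nn by simp
      qed
    next
      have "(\<Sum>j<n. v j - x j) = (\<Sum>j<Suc (n - 1 - k0). v' j - x' j)"
        using split[of "n - 1"] n'pos nn by simp
      also have "Suc (n - 1 - k0) = n'" using nn n'pos by simp
      finally show "(\<Sum>j<n. v j - x j) = 0" using x'(3) by simp
    next
      fix k assume k: "Suc k < n" and lt: "x (Suc k) < x k"
      show "(\<Sum>j<Suc k. v j - x j) = 0"
      proof (cases "Suc k < k0")
        case True then show ?thesis using lt unfolding x_def by simp
      next
        case F: False
        show ?thesis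
        proof (cases "Suc k = k0")
          case True
          then have "(\<Sum>j<Suc k. v j - x j) = (\<Sum>j<k0. v j - M)" unfolding x_def by simp
          then show ?thesis using hsum[of k0] h0 by simp
        next
          case False
          then have kk: "k0 \<le> k" using F by simp
          then have "Suc (k - k0) < n'" using k nn by simp
          moreover have "x' (Suc (k - k0)) < x' (k - k0)" using lt kk unfolding x_def by (simp add: Suc_diff_le)
          ultimately show ?thesis using split[OF kk] x'(4) by simp
        qed
      qed
    next
      fix c assume "\<forall>k\<in>{1..n}. (\<Sum>j<k. v j) \<le> real k * c"
      then show "x 0 \<le> c" using Mc k0 unfolding x_def by auto
    qed
  qed
qed


definition kkt :: "nat \<Rightarrow> real vec \<Rightarrow> real vec \<Rightarrow> bool" where
"kkt n v x \<longleftrightarrow> x \<in> Dset n \<and> (\<forall>k<n-1. (\<Sum>j<Suc k. v$j - x$j) \<le> 0) \<and> (\<Sum>j<n. v$j - x$j) = 0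
   \<and> (\<forall>k. Suc k < n \<longrightarrow> x$(Suc k) < x$k \<longrightarrow> (\<Sum>j<Suc k. v$j - x$j) = 0)"

lemma Dset_carrier: "x \<in> Dset n \<Longrightarrow> x \<in> carrier_vec n"
  unfolding Dset_def by auto

lemma Dset_mono: "x \<in> Dset n \<Longrightarrow> Suc i < n \<Longrightarrow> x $ Suc i \<le> x $ i"
  unfolding Dset_def by auto

lemma kkt_exists:
  assumes v: "v \<in> carrier_vec n"
  shows "\<exists>x. kkt n v x"
proof (cases "n = 0")
  case True
  then show ?thesis using v unfolding kkt_def Dset_def by (intro exI[of _ v]) auto
next
  case False
  then obtain xf where xf: "\<forall>i. Suc i < n \<longrightarrow> xf (Suc i) \<le> xf i"
    "\<forall>k<n. (\<Sum>j<Suc k. v$j - xf j) \<le> 0" "(\<Sum>j<n. v$j - xf j) = 0"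
    "\<forall>k. Suc k < n \<longrightarrow> xf (Suc k) < xf k \<longrightarrow> (\<Sum>j<Suc k. v$j - xf j) = 0"
    using pav[of n "\<lambda>j. v $ j"] by auto
  define x where "x = vec n xf"
  have s: "(\<Sum>j<Suc k. v$j - x$j) = (\<Sum>j<Suc k. v$j - xf j)" if "k < n" for k
    by (rule sum.cong) (use that in \<open>auto simp: x_def\<close>)
  have s2: "(\<Sum>j<n. v$j - x$j) = (\<Sum>j<n. v$j - xf j)"
    by (rule sum.cong) (auto simp: x_def)
  show ?thesis
    unfolding kkt_def Dset_def
  proof (intro exI[of _ x] conjI allI impI CollectI ballI)
    show "x \<in> carrier_vec n" unfolding x_def by simp
    fix i assume "i + 1 < n" then show "x $ (i + 1) \<le> x $ i" using xf(1) unfolding x_def by auto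
  next
    fix k assume "k < n - 1"
    then have kn: "k < n" by simp
    show "(\<Sum>j<Suc k. v$j - x$j) \<le> 0" unfolding s[OF kn] using xf(2) kn by blast
  next
    show "(\<Sum>j<n. v$j - x$j) = 0" using s2 xf(3) by simp
  next
    fix k assume "Suc k < n" "x $ Suc k < x $ k"
    then have "xf (Suc k) < xf k" "k < n" unfolding x_def by auto
    then show "(\<Sum>j<Suc k. v$j - x$j) = 0" unfolding s[OF \<open>k < n\<close>] using xf(4) \<open>Suc k < n\<close> by blast
  qed
qed



lemma kkt_vi:
  assumes k: "kkt n v x" and z: "z \<in> Dset n"
  shows "(\<Sum>i<n. (z$i - x$i) * (v$i - x$i)) \<le> 0"
proof (cases n)
  case 0 then show ?thesis by simp
next
  case (Suc m)
  let ?a = "\<lambda>i. z$i - x$i" and ?d = "\<lambda>i. v$i - x$i"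
  have "(\<Sum>i<Suc m. ?a i * ?d i) = (\<Sum>k<m. (\<Sum>j<Suc k. ?d j) * (?a k - ?a (Suc k))) + (\<Sum>j<Suc m. ?d j) * ?a m"
    by (rule sum_by_parts)
  also have "(\<Sum>j<Suc m. ?d j) = 0" using k Suc unfolding kkt_def by simp
  also have "(\<Sum>k<m. (\<Sum>j<Suc k. ?d j) * (?a k - ?a (Suc k))) \<le> 0"
  proof (rule sum_nonpos)
    fix k assume "k \<in> {..<m}"
    then have km: "Suc k < n" using Suc by simp
    define S where "S = (\<Sum>j<Suc k. ?d j)"
    have S: "S \<le> 0" using k km unfolding kkt_def S_def by simp
    have zz: "z $ Suc k \<le> z $ k" using Dset_mono[OF z km] .
    have xx: "x $ Suc k \<le> x $ k" using Dset_mono[OF _ km] k unfolding kkt_def by blast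
    have c: "S * (x$k - x$Suc k) = 0"
    proof (cases "x $ Suc k < x $ k")
      case True then show ?thesis using k km unfolding kkt_def S_def by simp
    next
      case False then show ?thesis using xx by simp
    qed
    have "S * (?a k - ?a (Suc k)) = S * (z$k - z$Suc k) - S * (x$k - x$Suc k)"
      by (simp add: algebra_simps)
    also have "\<dots> \<le> 0" using c S zz mult_nonpos_nonneg[of S "z$k - z$Suc k"] by linarith
    finally have "S * (?a k - ?a (Suc k)) \<le> 0" .
    then show "(\<Sum>j<Suc k. ?d j) * (?a k - ?a (Suc k)) \<le> 0" unfolding S_def .
  qed
  finally show ?thesis using Suc by simp
qed

lemma kkt_ineq:
  assumes k: "kkt n v x" and z: "z \<in> Dset n"
  shows "(\<Sum>i<n. (x$i - v$i)^2) + (\<Sum>i<n. (z$i - x$i)^2) \<le> (\<Sum>i<n. (z$i - v$i)^2)"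
proof -
  have e: "(z$i - v$i)^2 = (z$i - x$i)^2 + (x$i - v$i)^2 - 2 * ((z$i - x$i) * (v$i - x$i))" for i
    by (simp add: power2_eq_square algebra_simps)
  have "(\<Sum>i<n. (z$i - v$i)^2) = (\<Sum>i<n. (z$i - x$i)^2) + (\<Sum>i<n. (x$i - v$i)^2) - 2 * (\<Sum>i<n. (z$i - x$i) * (v$i - x$i))"
    unfolding e by (simp add: sum.distrib sum_subtractf sum_distrib_left)
  then show ?thesis using kkt_vi[OF k z] by simp
qed



lemma vnorm_sum: "a \<in> carrier_vec n \<Longrightarrow> vnorm a = sqrt (\<Sum>i<n. (a$i)^2)"
  unfolding vnorm_def scalar_prod_def by (simp add: atLeast0LessThan power2_eq_square)

lemma vnorm_diff: "a \<in> carrier_vec n \<Longrightarrow> b \<in> carrier_vec n \<Longrightarrow> vnorm (a - b) = sqrt (\<Sum>i<n. (a$i - b$i)^2)"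
proof -
  assume a: "a \<in> carrier_vec n" and b: "b \<in> carrier_vec n"
  have "vnorm (a - b) = sqrt (\<Sum>i<n. ((a - b)$i)^2)" using a b by (intro vnorm_sum) auto
  also have "(\<Sum>i<n. ((a - b)$i)^2) = (\<Sum>i<n. (a$i - b$i)^2)" using a b by (intro sum.cong) auto
  finally show ?thesis .
qed

lemma sum_sq_zero:
  fixes f :: "nat \<Rightarrow> real"
  assumes "(\<Sum>i<n. (f i)^2) \<le> 0" "i < n"
  shows "f i = 0"
proof -
  have "(\<Sum>i<n. (f i)^2) = 0" using assms(1) sum_nonneg[of "{..<n}" "\<lambda>i. (f i)^2"] by simp
  then have "\<forall>i\<in>{..<n}. (f i)^2 = 0" by (subst (asm) sum_nonneg_eq_0_iff) auto
  then show ?thesis using assms(2) by auto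
qed


lemma kkt_proj:
  assumes k: "kkt n v x" and v: "v \<in> carrier_vec n"
  shows "projD n v = x"
  unfolding projD_def
proof (rule the_equality)
  have xD: "x \<in> Dset n" using k unfolding kkt_def by simp
  have xc: "x \<in> carrier_vec n" using Dset_carrier[OF xD] .
  show "x \<in> Dset n \<and> (\<forall>z\<in>Dset n. vnorm (x - v) \<le> vnorm (z - v))"
  proof (intro conjI ballI xD)
    fix z assume z: "z \<in> Dset n"
    have "(\<Sum>i<n. (x$i - v$i)^2) \<le> (\<Sum>i<n. (z$i - v$i)^2)"
    proof -
      have "0 \<le> (\<Sum>i<n. (z$i - x$i)^2)" by (rule sum_nonneg) simp
      then show ?thesis using kkt_ineq[OF k z] by linarith
    qed
    moreover have "z \<in> carrier_vec n" using Dset_carrier[OF z] .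
    ultimately show "vnorm (x - v) \<le> vnorm (z - v)"
      using vnorm_diff[OF xc v] vnorm_diff[of z n v] v by simp
  qed
  fix x' assume x': "x' \<in> Dset n \<and> (\<forall>z\<in>Dset n. vnorm (x' - v) \<le> vnorm (z - v))"
  have x'D: "x' \<in> Dset n" using x' by (rule conjunct1)
  have x'c: "x' \<in> carrier_vec n" using Dset_carrier[OF x'D] .
  have "vnorm (x' - v) \<le> vnorm (x - v)" using bspec[OF conjunct2[OF x'] xD] .
  then have "(\<Sum>i<n. (x'$i - v$i)^2) \<le> (\<Sum>i<n. (x$i - v$i)^2)"
    using vnorm_diff[OF xc v] vnorm_diff[OF x'c v] by simp
  moreover have "(\<Sum>i<n. (x$i - v$i)^2) + (\<Sum>i<n. (x'$i - x$i)^2) \<le> (\<Sum>i<n. (x'$i - v$i)^2)"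
    using kkt_ineq[OF k x'D] .
  ultimately have "(\<Sum>i<n. (x'$i - x$i)^2) \<le> 0" by linarith
  then have "x'$i - x$i = 0" if "i < n" for i using sum_sq_zero[of "\<lambda>i. x'$i - x$i" n i] that by blast
  then show "x' = x" using x'c xc by (intro eq_vecI) auto
qed

lemma proj_kkt: "v \<in> carrier_vec n \<Longrightarrow> kkt n v (projD n v)"
proof -
  assume v: "v \<in> carrier_vec n"
  obtain x where "kkt n v x" using kkt_exists[OF v] by blast
  then show ?thesis using kkt_proj[OF _ v] by simp
qed

lemma proj_carrier: "v \<in> carrier_vec n \<Longrightarrow> projD n v \<in> carrier_vec n"
  using proj_kkt[of v n] Dset_carrier unfolding kkt_def by auto


lemma B_carrier[simp]: "Bmat n \<in> carrier_mat (n - 1) n"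
  unfolding Bmat_def by simp

lemma B_dims[simp]: "dim_row (Bmat n) = n - 1" "dim_col (Bmat n) = n"
  unfolding Bmat_def by simp_all

lemma B_mult:
  assumes x: "x \<in> carrier_vec n" and i: "i < n - 1"
  shows "(Bmat n *\<^sub>v x) $ i = x$i - x$Suc i"
proof -
  have si: "Suc i < n" "i < n" using i by arith+
  have "(Bmat n *\<^sub>v x) $ i = (\<Sum>j\<in>{0..<n}. Bmat n $$ (i,j) * x$j)"
    using i x by (simp add: scalar_prod_def row_def)
  also have "\<dots> = (\<Sum>j\<in>{0..<n}. (if j = i then x$j else 0) - (if j = Suc i then x$j else 0))"
    by (rule sum.cong) (use i in \<open>auto simp: Bmat_def\<close>)
  also have "\<dots> = x$i - x$Suc i" using si by (simp add: sum_subtractf)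
  finally show ?thesis .
qed

lemma BT_mult:
  assumes l: "lam \<in> carrier_vec (n - 1)" and k: "k < n"
  shows "(transpose_mat (Bmat n) *\<^sub>v lam) $ k = (if k < n - 1 then lam$k else 0) - (if k = 0 then 0 else lam$(k-1))"
proof -
  have "(transpose_mat (Bmat n) *\<^sub>v lam) $ k = (\<Sum>j\<in>{0..<n-1}. Bmat n $$ (j,k) * lam$j)"
    using k l by (simp add: scalar_prod_def row_def)
  also have "\<dots> = (\<Sum>j\<in>{0..<n-1}. (if j = k then lam$j else 0) - (if k \<noteq> 0 \<and> j = k - 1 then lam$j else 0))"
    by (rule sum.cong) (use k in \<open>auto simp: Bmat_def\<close>)
  also have "\<dots> = (if k < n - 1 then lam$k else 0) - (if k = 0 then 0 else lam$(k-1))"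
  proof -
    have "k \<noteq> 0 \<Longrightarrow> k - 1 < n - 1" using k by arith
    then show ?thesis by (auto simp: sum_subtractf)
  qed
  finally show ?thesis .
qed

definition Lam :: "nat \<Rightarrow> real vec \<Rightarrow> real vec" where
  "Lam n v = vec (n - 1) (\<lambda>k. \<Sum>j<Suc k. v$j - projD n v $ j)"

lemma Lam_carrier[simp]: "Lam n v \<in> carrier_vec (n - 1)"
  unfolding Lam_def by simp

lemma Lam_dim[simp]: "dim_vec (Lam n v) = n - 1"
  unfolding Lam_def by simp

lemma Lam_index: "k < n - 1 \<Longrightarrow> Lam n v $ k = (\<Sum>j<Suc k. v$j - projD n v $ j)"
  unfolding Lam_def by simp

lemma Lam_eq:
  assumes v: "v \<in> carrier_vec n"
  shows "projD n v - v + transpose_mat (Bmat n) *\<^sub>v Lam n v = 0\<^sub>v n"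
proof (rule eq_vecI)
  let ?x = "projD n v"
  have xc: "?x \<in> carrier_vec n" using proj_carrier[OF v] .
  have kk: "kkt n v ?x" using proj_kkt[OF v] .
  show "dim_vec (?x - v + transpose_mat (Bmat n) *\<^sub>v Lam n v) = dim_vec (0\<^sub>v n)" using v by simp
  fix k assume "k < dim_vec (0\<^sub>v n)"
  then have k: "k < n" by simp
  have e: "(?x - v + transpose_mat (Bmat n) *\<^sub>v Lam n v) $ k = ?x$k - v$k + ((if k < n - 1 then Lam n v $k else 0) - (if k = 0 then 0 else Lam n v $(k-1)))"
    using k v xc BT_mult[OF Lam_carrier k] by simp
  have tot: "(\<Sum>j<n. v$j - ?x$j) = 0" using kk unfolding kkt_def by simp
  have "?x$k - v$k + ((if k < n - 1 then Lam n v $k else 0) - (if k = 0 then 0 else Lam n v $(k-1))) = 0"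
  proof (cases "k < n - 1")
    case True
    show ?thesis
    proof (cases k)
      case 0 then show ?thesis using True by (simp add: Lam_index)
    next
      case (Suc k')
      then show ?thesis using True by (simp add: Lam_index)
    qed
  next
    case False
    then have kn: "k = n - 1" using k by simp
    show ?thesis
    proof (cases k)
      case 0
      then have "n = 1" using kn k by simp
      then show ?thesis using tot 0 by simp
    next
      case (Suc k')
      then have nn: "n = Suc (Suc k')" using kn k by simp
      have "(\<Sum>j<n. v$j - ?x$j) = (\<Sum>j<Suc k'. v$j - ?x$j) + (v$Suc k' - ?x$Suc k')"
        unfolding nn by simp
      then show ?thesis using tot False Suc nn by (simp add: Lam_index)
    qed
  qed
  then show "(?x - v + transpose_mat (Bmat n) *\<^sub>v Lam n v) $ k = 0\<^sub>v n $ k" using e k by simp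
qed

lemma MD_eq:
  assumes v: "v \<in> carrier_vec n"
  shows "MD n v = {Lam n v}"
proof
  let ?x = "projD n v"
  have xc: "?x \<in> carrier_vec n" using proj_carrier[OF v] .
  have kk: "kkt n v ?x" using proj_kkt[OF v] .
  have xD: "?x \<in> Dset n" using kk unfolding kkt_def by simp
  show "{Lam n v} \<subseteq> MD n v"
  proof -
    have "(\<forall>i < n - 1. (Bmat n *\<^sub>v ?x) $ i \<ge> 0)"
      using B_mult[OF xc] Dset_mono[OF xD] by simp
    moreover have "\<forall>i < n - 1. Lam n v $ i \<le> 0"
      using kk unfolding kkt_def by (simp add: Lam_index)
    moreover have "Lam n v \<bullet> (Bmat n *\<^sub>v ?x) = 0"
    proof -
      have "Lam n v \<bullet> (Bmat n *\<^sub>v ?x) = (\<Sum>i\<in>{0..<n-1}. Lam n v $ i * (Bmat n *\<^sub>v ?x) $ i)"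
        by (simp add: scalar_prod_def)
      also have "\<dots> = 0"
      proof (rule sum.neutral, rule ballI)
        fix i assume "i \<in> {0..<n-1}"
        then have i: "i < n - 1" by simp
        show "Lam n v $ i * (Bmat n *\<^sub>v ?x) $ i = 0"
        proof (cases "?x $ Suc i < ?x $ i")
          case True
          then have "Lam n v $ i = 0" using kk i unfolding kkt_def by (simp add: Lam_index)
          then show ?thesis by simp
        next
          case False
          then have "?x $ Suc i = ?x $ i" using Dset_mono[OF xD, of i] i by simp
          then show ?thesis using B_mult[OF xc i] by simp
        qed
      qed
      finally show ?thesis .
    qed
    ultimately show ?thesis unfolding MD_def using Lam_eq[OF v] Lam_carrier[of n v] by simp
  qed
  show "MD n v \<subseteq> {Lam n v}"
  proof
    fix lam assume "lam \<in> MD n v"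
    then have lc: "lam \<in> carrier_vec (n - 1)" and eq: "?x - v + transpose_mat (Bmat n) *\<^sub>v lam = 0\<^sub>v n"
      unfolding MD_def by auto
    have ek: "?x$k - v$k + ((if k < n - 1 then lam $k else 0) - (if k = 0 then 0 else lam $(k-1))) = 0" if k: "k < n" for k
    proof -
      have "(?x - v + transpose_mat (Bmat n) *\<^sub>v lam) $ k = 0" using eq k by simp
      then show ?thesis using k v xc BT_mult[OF lc k] by simp
    qed
    have "lam $ k = (\<Sum>j<Suc k. v$j - ?x$j)" if "k < n - 1" for k
      using that
    proof (induction k)
      case 0 then show ?case using ek[of 0] by simp
    next
      case (Suc k)
      have "Suc k < n" using Suc.prems by arith
      from ek[OF this] Suc show ?case by simp
    qed
    then have "lam = Lam n v" using lc by (intro eq_vecI) (auto simp: Lam_index)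
    then show "lam \<in> {Lam n v}" by simp
  qed
qed

lemma ID_eq:
  assumes v: "v \<in> carrier_vec n"
  shows "ID n v = {i. i < n - 1 \<and> projD n v $ i = projD n v $ Suc i}"
  unfolding ID_def using B_mult[OF proj_carrier[OF v]] by auto

lemma vsupp_Lam: "vsupp (Lam n v) = {k. k < n - 1 \<and> Lam n v $ k \<noteq> 0}"
  unfolding vsupp_def by simp

lemma KD_eq:
  assumes v: "v \<in> carrier_vec n"
  shows "KD n v = {K. vsupp (Lam n v) \<subseteq> K \<and> K \<subseteq> ID n v \<and> full_row_rank (BK n K)}"
  unfolding KD_def MD_eq[OF v] by auto


lemma comp_bound:
  assumes a: "a \<in> carrier_vec n" and i: "i < n"
  shows "\<bar>a$i\<bar> \<le> vnorm a"
proof -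
  have "(a$i)^2 \<le> (\<Sum>j<n. (a$j)^2)"
    using i by (intro member_le_sum) auto
  then have "sqrt ((a$i)^2) \<le> sqrt (\<Sum>j<n. (a$j)^2)" by (rule real_sqrt_le_mono)
  then show ?thesis using vnorm_sum[OF a] by simp
qed

lemma nonexp:
  assumes v: "v \<in> carrier_vec n" and v': "v' \<in> carrier_vec n"
  shows "vnorm (projD n v' - projD n v) \<le> vnorm (v' - v)"
proof -
  let ?x = "projD n v" and ?x' = "projD n v'"
  have k: "kkt n v ?x" and k': "kkt n v' ?x'" using proj_kkt v v' by auto
  have xD: "?x \<in> Dset n" and x'D: "?x' \<in> Dset n" using k k' unfolding kkt_def by auto
  have xc: "?x \<in> carrier_vec n" and x'c: "?x' \<in> carrier_vec n" using proj_carrier v v' by auto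
  define a where "a = (\<lambda>i. ?x'$i - ?x$i)"
  define b where "b = (\<lambda>i. v'$i - v$i)"
  have 1: "(\<Sum>i<n. (?x'$i - ?x$i) * (v$i - ?x$i)) \<le> 0" using kkt_vi[OF k x'D] .
  have 2: "(\<Sum>i<n. (?x$i - ?x'$i) * (v'$i - ?x'$i)) \<le> 0" using kkt_vi[OF k' xD] .
  have "(\<Sum>i<n. (?x'$i - ?x$i) * (v$i - ?x$i)) + (\<Sum>i<n. (?x$i - ?x'$i) * (v'$i - ?x'$i))
      = (\<Sum>i<n. (a i)^2 - a i * b i)"
    unfolding sum.distrib[symmetric] a_def b_def by (intro sum.cong) (auto simp: algebra_simps power2_eq_square)
  then have 3: "(\<Sum>i<n. (a i)^2) \<le> (\<Sum>i<n. a i * b i)" using 1 2 by (simp add: sum_subtractf)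
  have "0 \<le> (\<Sum>i<n. (a i - b i)^2)" by (rule sum_nonneg) simp
  also have "(\<Sum>i<n. (a i - b i)^2) = (\<Sum>i<n. (a i)^2) + (\<Sum>i<n. (b i)^2) - 2 * (\<Sum>i<n. a i * b i)"
    by (simp add: power2_eq_square algebra_simps sum.distrib sum_subtractf sum_distrib_left)
  finally have "(\<Sum>i<n. (a i)^2) \<le> (\<Sum>i<n. (b i)^2)" using 3 by linarith
  then show ?thesis unfolding vnorm_diff[OF x'c xc] vnorm_diff[OF v' v] a_def b_def by simp
qed

lemma local_stab:
  assumes v: "v \<in> carrier_vec n"
  shows "\<exists>\<delta>>0. \<forall>v'\<in>carrier_vec n. vnorm (v' - v) < \<delta> \<longrightarrow>
           ID n v' \<subseteq> ID n v \<and> vsupp (Lam n v) \<subseteq> vsupp (Lam n v')"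
proof -
  let ?x = "projD n v"
  define g where "g = (\<lambda>k. if ?x$k = ?x$Suc k then 1 else \<bar>?x$k - ?x$Suc k\<bar> / 3)"
  define h where "h = (\<lambda>k. if Lam n v $ k = 0 then 1 else \<bar>Lam n v $ k\<bar> / (2 * real n + 1))"
  define S where "S = insert 1 ((\<lambda>k. min (g k) (h k)) ` {..<n-1})"
  define \<delta> where "\<delta> = Min S"
  have finS: "finite S" and neS: "S \<noteq> {}" unfolding S_def by auto
  have gpos: "g k > 0" for k unfolding g_def by auto
  have hpos: "h k > 0" for k unfolding h_def by auto
  have dpos: "\<delta> > 0" unfolding \<delta>_def using finS neS gpos hpos
    by (subst Min_gr_iff) (auto simp: S_def)
  have dg: "\<delta> \<le> g k" and dh: "\<delta> \<le> h k" if "k < n - 1" for k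
  proof -
    have "min (g k) (h k) \<in> S" using that unfolding S_def by auto
    then have "\<delta> \<le> min (g k) (h k)" unfolding \<delta>_def using finS by (rule Min_le[rotated])
    then show "\<delta> \<le> g k" "\<delta> \<le> h k" by auto
  qed
  show ?thesis
  proof (intro exI[of _ \<delta>] conjI dpos ballI impI)
    fix v' assume v': "v' \<in> carrier_vec n" and e: "vnorm (v' - v) < \<delta>"
    let ?x' = "projD n v'"
    have xc: "?x \<in> carrier_vec n" and x'c: "?x' \<in> carrier_vec n" using proj_carrier v v' by auto
    have ne: "vnorm (?x' - ?x) \<le> vnorm (v' - v)" using nonexp[OF v v'] .
    have ax: "\<bar>?x'$i - ?x$i\<bar> < \<delta>" if "i < n" for i
      using comp_bound[of "?x' - ?x" n i] that xc x'c ne e by simp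
    have av: "\<bar>v'$i - v$i\<bar> < \<delta>" if "i < n" for i
      using comp_bound[of "v' - v" n i] that v v' e by simp
    show "ID n v' \<subseteq> ID n v"
    proof
      fix i assume "i \<in> ID n v'"
      then have i: "i < n - 1" and eq: "?x'$i = ?x'$Suc i" unfolding ID_eq[OF v'] by auto
      have i1: "i < n" "Suc i < n" using i by arith+
      have "?x$i = ?x$Suc i"
      proof (rule ccontr)
        assume neq: "?x$i \<noteq> ?x$Suc i"
        then have "\<delta> \<le> \<bar>?x$i - ?x$Suc i\<bar> / 3" using dg[OF i] unfolding g_def by simp
        then have "3 * \<delta> \<le> \<bar>?x$i - ?x$Suc i\<bar>" by simp
        moreover have "\<bar>?x$i - ?x$Suc i\<bar> < 2 * \<delta>" using ax[OF i1(1)] ax[OF i1(2)] eq by linarith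
        ultimately show False using dpos by linarith
      qed
      then show "i \<in> ID n v" unfolding ID_eq[OF v] using i by simp
    qed
    show "vsupp (Lam n v) \<subseteq> vsupp (Lam n v')"
    proof
      fix k assume "k \<in> vsupp (Lam n v)"
      then have k: "k < n - 1" and nz: "Lam n v $ k \<noteq> 0" unfolding vsupp_Lam by auto
      have "Lam n v' $ k \<noteq> 0"
      proof
        assume z: "Lam n v' $ k = 0"
        have "Lam n v' $ k - Lam n v $ k = (\<Sum>j<Suc k. (v'$j - v$j) - (?x'$j - ?x$j))"
          unfolding Lam_index[OF k] sum_subtractf[symmetric] by (intro sum.cong) auto
        also have "\<bar>\<dots>\<bar> \<le> (\<Sum>j<Suc k. \<bar>(v'$j - v$j) - (?x'$j - ?x$j)\<bar>)" by (rule sum_abs)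
        also have "\<dots> \<le> (\<Sum>j<Suc k. 2 * \<delta>)"
        proof (rule sum_mono)
          fix j assume "j \<in> {..<Suc k}"
          then have "j < n" using k by auto
          then show "\<bar>(v'$j - v$j) - (?x'$j - ?x$j)\<bar> \<le> 2 * \<delta>" using ax av by fastforce
        qed
        also have "\<dots> = real (Suc k) * (2 * \<delta>)" by simp
        also have "\<dots> \<le> real n * (2 * \<delta>)" using k dpos by (intro mult_right_mono) auto
        finally have b1: "\<bar>Lam n v $ k\<bar> \<le> real n * (2 * \<delta>)" using z by simp
        have "\<delta> \<le> \<bar>Lam n v $ k\<bar> / (2 * real n + 1)" using dh[OF k] nz unfolding h_def by simp
        then have "\<delta> * (2 * real n + 1) \<le> \<bar>Lam n v $ k\<bar>" by (simp add: field_simps)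
        then show False using b1 dpos by (simp add: algebra_simps)
      qed
      then show "k \<in> vsupp (Lam n v')" unfolding vsupp_Lam using k by simp
    qed
  qed
qed


lemma K_card_set: "K \<subseteq> {..<m} \<Longrightarrow> {i. i < m \<and> i \<in> K} = K"
  by auto

lemma BK_carrier:
  assumes K: "K \<subseteq> {..<n-1}"
  shows "BK n K \<in> carrier_mat (card K) n"
proof -
  have "dim_row (BK n K) = card K" unfolding BK_def dim_submatrix using K_card_set[OF K] by simp
  moreover have "dim_col (BK n K) = n" unfolding BK_def dim_submatrix by simp
  ultimately show ?thesis by auto
qed

lemma K_fin: "(K::nat set) \<subseteq> {..<m} \<Longrightarrow> finite K"
  by (rule finite_subset) auto

lemma pick_K: "K \<subseteq> {..<m} \<Longrightarrow> j < card K \<Longrightarrow> pick K j \<in> K"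
  by (rule pick_in_set) (rule disjI1)

lemma BK_index:
  assumes K: "K \<subseteq> {..<n-1}" and j: "j < card K" and c: "c < n"
  shows "BK n K $$ (j, c) = Bmat n $$ (pick K j, c)"
proof -
  have "BK n K $$ (j, c) = Bmat n $$ (pick K j, pick UNIV c)"
    unfolding BK_def using j c K_card_set[OF K] by (intro submatrix_index) auto
  then show ?thesis by (simp add: pick_UNIV)
qed

lemma BK_mult:
  assumes K: "K \<subseteq> {..<n-1}" and j: "j < card K" and z: "z \<in> carrier_vec n"
  shows "(BK n K *\<^sub>v z) $ j = z $ pick K j - z $ Suc (pick K j)"
proof -
  have p: "pick K j < n - 1" using pick_K[OF K j] K by auto
  have "(BK n K *\<^sub>v z) $ j = (\<Sum>c\<in>{0..<n}. BK n K $$ (j,c) * z$c)"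
    using BK_carrier[OF K] j z by (simp add: scalar_prod_def row_def)
  also have "\<dots> = (\<Sum>c\<in>{0..<n}. Bmat n $$ (pick K j,c) * z$c)"
    by (rule sum.cong) (auto simp: BK_index[OF K j])
  also have "\<dots> = (Bmat n *\<^sub>v z) $ pick K j"
    using p z by (simp add: scalar_prod_def row_def)
  also have "\<dots> = z $ pick K j - z $ Suc (pick K j)" using B_mult[OF z p] .
  finally show ?thesis .
qed

lemma pick_image:
  assumes K: "K \<subseteq> {..<m}"
  shows "pick K ` {..<card K} = K" "inj_on (pick K) {..<card K}"
proof -
  show "pick K ` {..<card K} = K"
  proof
    show "pick K ` {..<card K} \<subseteq> K" using pick_K[OF K] by auto
    show "K \<subseteq> pick K ` {..<card K}"
    proof
      fix i assume i: "i \<in> K"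
      have "{a\<in>K. a < i} \<subset> K" using i by auto
      then have "card {a\<in>K. a < i} < card K" using K_fin[OF K] by (rule psubset_card_mono[rotated])
      then show "i \<in> pick K ` {..<card K}" using pick_card_in_set[OF i] by force
    qed
  qed
  show "inj_on (pick K) {..<card K}"
  proof (rule inj_onI)
    fix a b assume a: "a \<in> {..<card K}" and b: "b \<in> {..<card K}" and e: "pick K a = pick K b"
    show "a = b"
    proof (rule ccontr)
      assume "a \<noteq> b"
      then have "a < b \<or> b < a" by auto
      then show False using pick_mono[of b K a] pick_mono[of a K b] a b e by auto
    qed
  qed
qed


definition restr :: "nat set \<Rightarrow> real vec \<Rightarrow> real vec" where
  "restr K mu = vec (card K) (\<lambda>j. mu $ pick K j)"

definition expd :: "nat \<Rightarrow> nat set \<Rightarrow> real vec \<Rightarrow> real vec" where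
  "expd n K mu = vec (n - 1) (\<lambda>i. if i \<in> K then mu $ card {a\<in>K. a < i} else 0)"

lemma restr_carrier[simp]: "restr K mu \<in> carrier_vec (card K)"
  unfolding restr_def by simp

lemma expd_carrier[simp]: "expd n K mu \<in> carrier_vec (n - 1)"
  unfolding expd_def by simp

lemma restr_expd:
  assumes K: "K \<subseteq> {..<n-1}" and mu: "mu \<in> carrier_vec (card K)"
  shows "restr K (expd n K mu) = mu"
proof (rule eq_vecI)
  show "dim_vec (restr K (expd n K mu)) = dim_vec mu" using mu by simp
  fix j assume "j < dim_vec mu"
  then have j: "j < card K" using mu by simp
  have "pick K j \<in> K" "pick K j < n - 1" using pick_K[OF K j] K by auto
  then show "restr K (expd n K mu) $ j = mu $ j"
    unfolding restr_def expd_def using j card_pick[of j K] by simp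
qed

lemma vsupp_expd: "vsupp (expd n K mu) \<subseteq> K"
  unfolding vsupp_def expd_def by (auto split: if_splits)

lemma BKT_restr:
  assumes K: "K \<subseteq> {..<n-1}" and mu: "mu \<in> carrier_vec (n - 1)" and s: "vsupp mu \<subseteq> K"
  shows "transpose_mat (BK n K) *\<^sub>v restr K mu = transpose_mat (Bmat n) *\<^sub>v mu"
proof (rule eq_vecI)
  have BKc: "BK n K \<in> carrier_mat (card K) n" using BK_carrier[OF K] .
  show "dim_vec (transpose_mat (BK n K) *\<^sub>v restr K mu) = dim_vec (transpose_mat (Bmat n) *\<^sub>v mu)"
    using BKc by simp
  fix c assume "c < dim_vec (transpose_mat (Bmat n) *\<^sub>v mu)"
  then have c: "c < n" by simp
  have "(transpose_mat (BK n K) *\<^sub>v restr K mu) $ c = (\<Sum>j\<in>{..<card K}. BK n K $$ (j,c) * mu $ pick K j)"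
    using BKc c by (simp add: scalar_prod_def row_def restr_def atLeast0LessThan)
  also have "\<dots> = (\<Sum>j\<in>{..<card K}. Bmat n $$ (pick K j, c) * mu $ pick K j)"
    by (rule sum.cong) (auto simp: BK_index[OF K _ c])
  also have "\<dots> = (\<Sum>i\<in>K. Bmat n $$ (i, c) * mu $ i)"
    using sum.reindex[OF pick_image(2)[OF K], of "\<lambda>i. Bmat n $$ (i, c) * mu $ i"] pick_image(1)[OF K] by simp
  also have "\<dots> = (\<Sum>i\<in>{..<n-1}. Bmat n $$ (i, c) * mu $ i)"
  proof (rule sum.mono_neutral_left)
    show "\<forall>i\<in>{..<n - 1} - K. Bmat n $$ (i, c) * mu $ i = 0"
      using s mu unfolding vsupp_def by auto
  qed (use K in auto)
  also have "\<dots> = (transpose_mat (Bmat n) *\<^sub>v mu) $ c"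
    using c mu by (simp add: scalar_prod_def row_def atLeast0LessThan)
  finally show "(transpose_mat (BK n K) *\<^sub>v restr K mu) $ c = (transpose_mat (Bmat n) *\<^sub>v mu) $ c" .
qed

lemma BT_inj:
  assumes l: "lam \<in> carrier_vec (n - 1)" and z: "transpose_mat (Bmat n) *\<^sub>v lam = 0\<^sub>v n"
  shows "lam = 0\<^sub>v (n - 1)"
proof -
  have ek: "(if k < n - 1 then lam$k else 0) - (if k = 0 then 0 else lam$(k-1)) = 0" if k: "k < n" for k
  proof -
    have "(transpose_mat (Bmat n) *\<^sub>v lam) $ k = 0" using z k by simp
    then show ?thesis using BT_mult[OF l k] by simp
  qed
  have "lam $ k = 0" if "k < n - 1" for k
    using that
  proof (induction k)
    case 0 then show ?case using ek[of 0] by simp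
  next
    case (Suc k)
    have "Suc k < n" using Suc.prems by arith
    from ek[OF this] Suc show ?case by simp
  qed
  then show ?thesis using l by (intro eq_vecI) auto
qed


lemma real_self_zero:
  assumes q: "(q :: real vec) \<in> carrier_vec m" and z: "q \<bullet> q = 0"
  shows "q = 0\<^sub>v m"
proof -
  have "(\<Sum>i<m. (q$i)^2) \<le> 0" using z q unfolding scalar_prod_def by (simp add: atLeast0LessThan power2_eq_square)
  then have "q$i = 0" if "i < m" for i using sum_sq_zero[of "\<lambda>i. q$i" m i] that by blast
  then show ?thesis using q by (intro eq_vecI) auto
qed

definition Minv :: "nat \<Rightarrow> nat set \<Rightarrow> real mat" where
  "Minv n K = the (mat_inverse (BK n K * transpose_mat (BK n K)))"

definition QK :: "nat \<Rightarrow> nat set \<Rightarrow> real mat" where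
  "QK n K = 1\<^sub>m n - transpose_mat (BK n K) * Minv n K * BK n K"

lemma Minv_props:
  assumes K: "K \<subseteq> {..<n-1}"
  shows "Minv n K \<in> carrier_mat (card K) (card K)"
    "BK n K * transpose_mat (BK n K) * Minv n K = 1\<^sub>m (card K)"
    "Minv n K * (BK n K * transpose_mat (BK n K)) = 1\<^sub>m (card K)"
proof -
  let ?B = "BK n K" and ?c = "card K"
  have BKc: "?B \<in> carrier_mat ?c n" using BK_carrier[OF K] .
  have Mc: "?B * transpose_mat ?B \<in> carrier_mat ?c ?c" using BKc by simp
  have "det (?B * transpose_mat ?B) \<noteq> 0"
  proof
    assume "det (?B * transpose_mat ?B) = 0"
    then obtain mu where mu: "mu \<in> carrier_vec ?c" "mu \<noteq> 0\<^sub>v ?c" "(?B * transpose_mat ?B) *\<^sub>v mu = 0\<^sub>v ?c"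
      using det_0_iff_vec_prod_zero[OF Mc] by blast
    let ?t = "transpose_mat ?B *\<^sub>v mu"
    have tc: "?t \<in> carrier_vec n" using BKc mu by simp
    have "?t \<bullet> ?t = mu \<bullet> (?B *\<^sub>v ?t)"
      by (rule transpose_vec_mult_scalar[OF BKc tc mu(1)])
    also have "?B *\<^sub>v ?t = (?B * transpose_mat ?B) *\<^sub>v mu"
      by (rule assoc_mult_mat_vec[symmetric, of _ ?c n _ ?c]) (use BKc mu(1) in auto)
    also have "\<dots> = 0\<^sub>v ?c" using mu(3) .
    finally have "?t \<bullet> ?t = 0" using mu(1) by simp
    then have t0: "?t = 0\<^sub>v n" using real_self_zero[OF tc] by blast
    have "transpose_mat (Bmat n) *\<^sub>v expd n K mu = ?t"
      using BKT_restr[OF K expd_carrier vsupp_expd, of mu] restr_expd[OF K mu(1)] by simp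
    then have "expd n K mu = 0\<^sub>v (n - 1)" using BT_inj[OF expd_carrier] t0 by simp
    then have "restr K (expd n K mu) = restr K (0\<^sub>v (n-1))" by simp
    moreover have "restr K (0\<^sub>v (n-1)) = 0\<^sub>v ?c"
    proof -
      have pk: "pick K j < n - Suc 0" if "j < card K" for j using pick_K[OF K that] K by auto
      show ?thesis unfolding restr_def by (intro eq_vecI) (auto simp: pk)
    qed
    ultimately have "mu = 0\<^sub>v ?c" using restr_expd[OF K mu(1)] by simp
    then show False using mu(2) by simp
  qed
  then have U: "?B * transpose_mat ?B \<in> Units (ring_mat TYPE(real) ?c undefined)"
    by (rule det_non_zero_imp_unit[OF Mc])
  then obtain C where C: "mat_inverse (?B * transpose_mat ?B) = Some C"
    using mat_inverse(1)[OF Mc, of undefined] U by (cases "mat_inverse (?B * transpose_mat ?B)") auto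
  have "?B * transpose_mat ?B * C = 1\<^sub>m ?c \<and> C * (?B * transpose_mat ?B) = 1\<^sub>m ?c \<and> C \<in> carrier_mat ?c ?c"
    using mat_inverse(2)[OF Mc C] .
  then show "Minv n K \<in> carrier_mat ?c ?c"
    "?B * transpose_mat ?B * Minv n K = 1\<^sub>m ?c"
    "Minv n K * (?B * transpose_mat ?B) = 1\<^sub>m ?c"
    unfolding Minv_def C by auto
qed

lemma QK_carrier: "K \<subseteq> {..<n-1} \<Longrightarrow> QK n K \<in> carrier_mat n n"
proof -
  assume K: "K \<subseteq> {..<n-1}"
  have a: "BK n K \<in> carrier_mat (card K) n" using BK_carrier[OF K] .
  have b: "Minv n K \<in> carrier_mat (card K) (card K)" using Minv_props(1)[OF K] .
  have "transpose_mat (BK n K) * Minv n K * BK n K \<in> carrier_mat n n"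
    using a b by (intro mult_carrier_mat[of _ _ "card K"]) auto
  then show ?thesis unfolding QK_def by (intro minus_carrier_mat) auto
qed

lemma QK_apply:
  assumes K: "K \<subseteq> {..<n-1}" and d: "d \<in> carrier_vec n"
  shows "QK n K *\<^sub>v d = d - transpose_mat (BK n K) *\<^sub>v (Minv n K *\<^sub>v (BK n K *\<^sub>v d))"
proof -
  have BKc: "BK n K \<in> carrier_mat (card K) n" using BK_carrier[OF K] .
  have Mi: "Minv n K \<in> carrier_mat (card K) (card K)" using Minv_props(1)[OF K] .
  have "QK n K *\<^sub>v d = 1\<^sub>m n *\<^sub>v d - (transpose_mat (BK n K) * Minv n K * BK n K) *\<^sub>v d"
    unfolding QK_def using BKc Mi d by (intro minus_mult_distrib_mat_vec) auto
  also have "(transpose_mat (BK n K) * Minv n K * BK n K) *\<^sub>v d = transpose_mat (BK n K) *\<^sub>v (Minv n K *\<^sub>v (BK n K *\<^sub>v d))"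
    using BKc Mi d by (simp add: assoc_mult_mat_vec[of _ n "card K" _ n])
  finally show ?thesis using d by simp
qed


lemma Lam_carrier'[simp]: "Lam n v \<in> carrier_vec (n - Suc 0)"
  using Lam_carrier[of n v] by simp

lemma BK_zero_iff:
  assumes K: "K \<subseteq> {..<n-1}" and t: "t \<in> carrier_vec n"
  shows "(BK n K *\<^sub>v t = 0\<^sub>v (card K)) \<longleftrightarrow> (\<forall>i\<in>K. t$i = t$Suc i)"
proof
  have BKc: "BK n K \<in> carrier_mat (card K) n" using BK_carrier[OF K] .
  assume z: "BK n K *\<^sub>v t = 0\<^sub>v (card K)"
  show "\<forall>i\<in>K. t$i = t$Suc i"
  proof
    fix i assume i: "i \<in> K"
    have "{a\<in>K. a < i} \<subset> K" using i by auto
    then have j: "card {a\<in>K. a < i} < card K" using K_fin[OF K] by (rule psubset_card_mono[rotated])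
    have "(BK n K *\<^sub>v t) $ card {a\<in>K. a < i} = 0" using z j by simp
    then show "t$i = t$Suc i" using BK_mult[OF K j t] pick_card_in_set[OF i] by simp
  qed
next
  have BKc: "BK n K \<in> carrier_mat (card K) n" using BK_carrier[OF K] .
  assume h: "\<forall>i\<in>K. t$i = t$Suc i"
  show "BK n K *\<^sub>v t = 0\<^sub>v (card K)"
  proof (rule eq_vecI)
    show "dim_vec (BK n K *\<^sub>v t) = dim_vec (0\<^sub>v (card K))" using BKc by simp
    fix j assume "j < dim_vec (0\<^sub>v (card K))"
    then have j: "j < card K" by simp
    show "(BK n K *\<^sub>v t) $ j = 0\<^sub>v (card K) $ j"
      using BK_mult[OF K j t] h pick_K[OF K j] j by simp
  qed
qed

lemma QK_formula:
  assumes K: "K \<subseteq> {..<n-1}" and d: "d \<in> carrier_vec n" and e: "e \<in> carrier_vec n"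
    and Be: "BK n K *\<^sub>v e = 0\<^sub>v (card K)"
    and mu: "mu \<in> carrier_vec (n - 1)" and s: "vsupp mu \<subseteq> K"
    and de: "d = e + transpose_mat (Bmat n) *\<^sub>v mu"
  shows "QK n K *\<^sub>v d = e"
proof -
  let ?B = "BK n K" and ?c = "card K" and ?r = "restr K mu"
  have BKc: "?B \<in> carrier_mat ?c n" using BK_carrier[OF K] .
  have Mi: "Minv n K \<in> carrier_mat ?c ?c" using Minv_props(1)[OF K] .
  have rc: "?r \<in> carrier_vec ?c" by simp
  have T: "transpose_mat (Bmat n) *\<^sub>v mu = transpose_mat ?B *\<^sub>v ?r" using BKT_restr[OF K mu s] by simp
  have Tc: "transpose_mat ?B *\<^sub>v ?r \<in> carrier_vec n" using BKc by simp
  have "?B *\<^sub>v d = ?B *\<^sub>v e + ?B *\<^sub>v (transpose_mat ?B *\<^sub>v ?r)"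
    unfolding de T by (rule mult_add_distrib_mat_vec[OF BKc e Tc])
  also have "?B *\<^sub>v (transpose_mat ?B *\<^sub>v ?r) = (?B * transpose_mat ?B) *\<^sub>v ?r"
    by (rule assoc_mult_mat_vec[symmetric, of _ ?c n _ ?c]) (use BKc in auto)
  finally have Bd: "?B *\<^sub>v d = (?B * transpose_mat ?B) *\<^sub>v ?r" using Be BKc by simp
  have "Minv n K *\<^sub>v (?B *\<^sub>v d) = (Minv n K * (?B * transpose_mat ?B)) *\<^sub>v ?r"
    unfolding Bd by (rule assoc_mult_mat_vec[symmetric, of _ ?c ?c _ ?c]) (use Mi BKc in auto)
  also have "\<dots> = ?r" using Minv_props(3)[OF K] by simp
  finally have "QK n K *\<^sub>v d = d - transpose_mat ?B *\<^sub>v ?r" using QK_apply[OF K d] by simp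
  also have "\<dots> = e" unfolding de T using e Tc BKc by (intro eq_vecI) auto
  finally show ?thesis .
qed

lemma QK_range:
  assumes K: "K \<subseteq> {..<n-1}" and z: "z \<in> carrier_vec n"
  shows "BK n K *\<^sub>v (QK n K *\<^sub>v z) = 0\<^sub>v (card K)"
proof -
  let ?B = "BK n K" and ?c = "card K"
  have BKc: "?B \<in> carrier_mat ?c n" using BK_carrier[OF K] .
  have Mi: "Minv n K \<in> carrier_mat ?c ?c" using Minv_props(1)[OF K] .
  let ?y = "Minv n K *\<^sub>v (?B *\<^sub>v z)"
  have yc: "?y \<in> carrier_vec ?c" using Mi BKc z by simp
  have "?B *\<^sub>v (QK n K *\<^sub>v z) = ?B *\<^sub>v z - ?B *\<^sub>v (transpose_mat ?B *\<^sub>v ?y)"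
    unfolding QK_apply[OF K z] using BKc z yc by (intro mult_minus_distrib_mat_vec) auto
  also have "?B *\<^sub>v (transpose_mat ?B *\<^sub>v ?y) = (?B * transpose_mat ?B * Minv n K) *\<^sub>v (?B *\<^sub>v z)"
  proof -
    have "?B *\<^sub>v (transpose_mat ?B *\<^sub>v ?y) = (?B * transpose_mat ?B) *\<^sub>v ?y"
      by (rule assoc_mult_mat_vec[symmetric, of _ ?c n _ ?c]) (use BKc yc in auto)
    also have "\<dots> = (?B * transpose_mat ?B * Minv n K) *\<^sub>v (?B *\<^sub>v z)"
      by (rule assoc_mult_mat_vec[symmetric, of _ ?c ?c _ ?c]) (use BKc Mi z in auto)
    finally show ?thesis .
  qed
  also have "\<dots> = ?B *\<^sub>v z" using Minv_props(2)[OF K] BKc z by simp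
  finally show ?thesis using BKc z by simp
qed

lemma QK_kernel:
  assumes K: "K \<subseteq> {..<n-1}" and z: "z \<in> carrier_vec n"
    and orth: "\<forall>t\<in>carrier_vec n. (\<forall>i\<in>K. t$i = t$Suc i) \<longrightarrow> z \<bullet> t = 0"
  shows "QK n K *\<^sub>v z = 0\<^sub>v n"
proof -
  let ?B = "BK n K" and ?c = "card K"
  have BKc: "?B \<in> carrier_mat ?c n" using BK_carrier[OF K] .
  have Mi: "Minv n K \<in> carrier_mat ?c ?c" using Minv_props(1)[OF K] .
  let ?y = "Minv n K *\<^sub>v (?B *\<^sub>v z)" and ?q = "QK n K *\<^sub>v z"
  have yc: "?y \<in> carrier_vec ?c" using Mi BKc z by simp
  have qc: "?q \<in> carrier_vec n" using QK_carrier[OF K] z by simp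
  have Bq: "?B *\<^sub>v ?q = 0\<^sub>v ?c" using QK_range[OF K z] .
  then have qN: "\<forall>i\<in>K. ?q$i = ?q$Suc i" using BK_zero_iff[OF K qc] by simp
  have Tc: "transpose_mat ?B *\<^sub>v ?y \<in> carrier_vec n" using BKc yc by simp
  have "?q \<bullet> ?q = (z - transpose_mat ?B *\<^sub>v ?y) \<bullet> ?q" using QK_apply[OF K z] by simp
  also have "\<dots> = z \<bullet> ?q - (transpose_mat ?B *\<^sub>v ?y) \<bullet> ?q"
    using z Tc qc by (simp add: minus_scalar_prod_distrib)
  also have "(transpose_mat ?B *\<^sub>v ?y) \<bullet> ?q = ?y \<bullet> (?B *\<^sub>v ?q)"
    by (rule transpose_vec_mult_scalar[OF BKc qc yc])
  also have "\<dots> = 0" using Bq yc by simp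
  also have "z \<bullet> ?q = 0" using orth qc qN by blast
  finally have "?q \<bullet> ?q = 0" by simp
  then show ?thesis using real_self_zero[OF qc] by blast
qed

lemma main_local:
  assumes v: "v \<in> carrier_vec n"
  shows "\<exists>\<delta>>0. \<forall>v'\<in>carrier_vec n. vnorm (v' - v) < \<delta> \<longrightarrow>
     KD n v' \<subseteq> KD n v \<and> (\<forall>K\<in>KD n v'. vsupp (Lam n v) \<subseteq> K \<and>
        projD n v' = projD n v + QK n K *\<^sub>v (v' - v))"
proof -
  obtain \<delta> where dpos: "\<delta> > 0" and st: "\<forall>v'\<in>carrier_vec n. vnorm (v' - v) < \<delta> \<longrightarrow>
           ID n v' \<subseteq> ID n v \<and> vsupp (Lam n v) \<subseteq> vsupp (Lam n v')"
    using local_stab[OF v] by blast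
  show ?thesis
  proof (intro exI[of _ \<delta>] conjI dpos ballI impI)
    fix v' assume v': "v' \<in> carrier_vec n" and e: "vnorm (v' - v) < \<delta>"
    have IDs: "ID n v' \<subseteq> ID n v" and sups: "vsupp (Lam n v) \<subseteq> vsupp (Lam n v')" using st v' e by auto
    show "KD n v' \<subseteq> KD n v" using IDs sups unfolding KD_eq[OF v] KD_eq[OF v'] by blast
    fix K assume "K \<in> KD n v'"
    then have s': "vsupp (Lam n v') \<subseteq> K" and KI: "K \<subseteq> ID n v'" unfolding KD_eq[OF v'] by auto
    show "vsupp (Lam n v) \<subseteq> K" using sups s' by blast
    have K: "K \<subseteq> {..<n-1}" using KI unfolding ID_def by auto
    let ?x = "projD n v" and ?x' = "projD n v'"
    have xc: "?x \<in> carrier_vec n" and x'c: "?x' \<in> carrier_vec n" using proj_carrier v v' by auto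
    let ?mu = "Lam n v' - Lam n v"
    have muc: "?mu \<in> carrier_vec (n - 1)" unfolding carrier_vec_def by simp
    have mus: "vsupp ?mu \<subseteq> K"
    proof
      fix i assume "i \<in> vsupp ?mu"
      then have i: "i < n - 1" and ne: "Lam n v' $ i \<noteq> Lam n v $ i" unfolding vsupp_def by auto
      show "i \<in> K"
      proof (rule ccontr)
        assume nk: "i \<notin> K"
        have "Lam n v' $ i = 0" using nk s' i unfolding vsupp_def by auto
        moreover have "Lam n v $ i = 0" using nk s' sups i unfolding vsupp_def by auto
        ultimately show False using ne by simp
      qed
    qed
    have ec: "?x' - ?x \<in> carrier_vec n" using xc x'c by simp
    have Be: "BK n K *\<^sub>v (?x' - ?x) = 0\<^sub>v (card K)"
    proof -
      have "\<forall>i\<in>K. (?x' - ?x)$i = (?x' - ?x)$Suc i"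
      proof
        fix i assume i: "i \<in> K"
        then have "i \<in> ID n v'" "i \<in> ID n v" using KI IDs by auto
        then have "?x'$i = ?x'$Suc i" "?x$i = ?x$Suc i" "i < n" "Suc i < n"
          unfolding ID_eq[OF v] ID_eq[OF v'] by auto
        then show "(?x' - ?x)$i = (?x' - ?x)$Suc i" using xc x'c by simp
      qed
      then show ?thesis using BK_zero_iff[OF K ec] by simp
    qed
    have TL: "(transpose_mat (Bmat n) *\<^sub>v Lam n u) $ k = u$k - projD n u $ k"
      if u: "u \<in> carrier_vec n" and k: "k < n" for u k
    proof -
      have "(projD n u - u + transpose_mat (Bmat n) *\<^sub>v Lam n u) $ k = 0" using Lam_eq[OF u] k by simp
      then show ?thesis using k u proj_carrier[OF u] by simp
    qed
    have de: "v' - v = (?x' - ?x) + transpose_mat (Bmat n) *\<^sub>v ?mu"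
    proof (rule eq_vecI)
      show "dim_vec (v' - v) = dim_vec ((?x' - ?x) + transpose_mat (Bmat n) *\<^sub>v ?mu)" using v by simp
      fix k assume "k < dim_vec ((?x' - ?x) + transpose_mat (Bmat n) *\<^sub>v ?mu)"
      then have k: "k < n" by simp
      have "transpose_mat (Bmat n) *\<^sub>v ?mu = transpose_mat (Bmat n) *\<^sub>v Lam n v' - transpose_mat (Bmat n) *\<^sub>v Lam n v"
        by (rule mult_minus_distrib_mat_vec) auto
      then have "(transpose_mat (Bmat n) *\<^sub>v ?mu) $ k = (v'$k - ?x'$k) - (v$k - ?x$k)"
        using TL[OF v k] TL[OF v' k] k by simp
      then show "(v' - v) $ k = ((?x' - ?x) + transpose_mat (Bmat n) *\<^sub>v ?mu) $ k"
        using k v v' xc x'c by simp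
    qed
    have "QK n K *\<^sub>v (v' - v) = ?x' - ?x"
      by (rule QK_formula[OF K _ ec Be muc mus de]) (use v v' in simp)
    then show "?x' = ?x + QK n K *\<^sub>v (v' - v)" using xc x'c by auto
  qed
qed


lemma sum_perm:
  fixes h :: "nat \<Rightarrow> real"
  assumes "\<sigma> permutes {..<n}"
  shows "(\<Sum>i<n. h (\<sigma> i)) = (\<Sum>i<n. h i)"
  using sum.permute[OF assms, of h] by (simp add: comp_def)

lemma mono_gen:
  fixes f :: "nat \<Rightarrow> real"
  assumes m: "\<forall>i. Suc i < n \<longrightarrow> f (Suc i) \<le> f i" and ij: "i \<le> j" and j: "j < n"
  shows "f j \<le> f i"
  using ij j
proof (induction j)
  case 0 then show ?case by simp
next
  case (Suc j)
  show ?case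
  proof (cases "i = Suc j")
    case True then show ?thesis by simp
  next
    case False
    then have "i \<le> j" using Suc.prems by simp
    then have "f j \<le> f i" using Suc by simp
    moreover have "f (Suc j) \<le> f j" using m Suc.prems by simp
    ultimately show ?thesis by simp
  qed
qed

definition Tf :: "nat \<Rightarrow> (nat \<Rightarrow> real) \<Rightarrow> real" where
  "Tf n f = (\<Sum>j<n. \<Sum>i<j. \<bar>f i - f j\<bar>)"

lemma Tf_cong: "(\<And>i. i < n \<Longrightarrow> f i = g i) \<Longrightarrow> Tf n f = Tf n g"
  unfolding Tf_def by (intro sum.cong refl) auto

lemma Tf_double: "2 * Tf n f = (\<Sum>i<n. \<Sum>j<n. \<bar>f i - f j\<bar>)"
proof (induction n)
  case 0 then show ?case by (simp add: Tf_def)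
next
  case (Suc n)
  have "(\<Sum>i<Suc n. \<Sum>j<Suc n. \<bar>f i - f j\<bar>) = (\<Sum>i<n. (\<Sum>j<n. \<bar>f i - f j\<bar>) + \<bar>f i - f n\<bar>) + (\<Sum>j<n. \<bar>f n - f j\<bar>)"
    by simp
  also have "\<dots> = (\<Sum>i<n. \<Sum>j<n. \<bar>f i - f j\<bar>) + 2 * (\<Sum>i<n. \<bar>f i - f n\<bar>)"
    by (simp add: sum.distrib abs_minus_commute)
  also have "\<dots> = 2 * Tf (Suc n) f" using Suc by (simp add: Tf_def)
  finally show ?case by simp
qed

lemma Tf_perm:
  assumes "\<sigma> permutes {..<n}"
  shows "Tf n (\<lambda>i. f (\<sigma> i)) = Tf n f"
proof -
  have "2 * Tf n (\<lambda>i. f (\<sigma> i)) = (\<Sum>i<n. \<Sum>j<n. \<bar>f (\<sigma> i) - f (\<sigma> j)\<bar>)" by (rule Tf_double)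
  also have "\<dots> = (\<Sum>i<n. \<Sum>j<n. \<bar>f (\<sigma> i) - f j\<bar>)"
  proof (rule sum.cong[OF refl])
    fix i show "(\<Sum>j<n. \<bar>f (\<sigma> i) - f (\<sigma> j)\<bar>) = (\<Sum>j<n. \<bar>f (\<sigma> i) - f j\<bar>)"
      by (rule sum_perm[OF assms, of "\<lambda>j. \<bar>f (\<sigma> i) - f j\<bar>"])
  qed
  also have "\<dots> = (\<Sum>i<n. \<Sum>j<n. \<bar>f i - f j\<bar>)"
    by (rule sum_perm[OF assms, of "\<lambda>i. \<Sum>j<n. \<bar>f i - f j\<bar>"])
  also have "\<dots> = 2 * Tf n f" by (rule Tf_double[symmetric])
  finally show ?thesis by simp
qed

lemma Tf_sorted:
  fixes f :: "nat \<Rightarrow> real"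
  assumes m: "\<forall>i. Suc i < n \<longrightarrow> f (Suc i) \<le> f i"
  shows "Tf n f = (\<Sum>k<n. (real n - 2 * real k - 1) * f k)"
  using m
proof (induction n)
  case 0 then show ?case by (simp add: Tf_def)
next
  case (Suc n)
  have m': "\<forall>i. Suc i < n \<longrightarrow> f (Suc i) \<le> f i" using Suc.prems by simp
  have "Tf (Suc n) f = Tf n f + (\<Sum>i<n. \<bar>f i - f n\<bar>)" by (simp add: Tf_def)
  also have "(\<Sum>i<n. \<bar>f i - f n\<bar>) = (\<Sum>i<n. f i - f n)"
  proof (rule sum.cong)
    fix i assume "i \<in> {..<n}"
    then have "f n \<le> f i" using mono_gen[OF Suc.prems, of i n] by simp
    then show "\<bar>f i - f n\<bar> = f i - f n" by simp
  qed simp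
  also have "Tf n f = (\<Sum>k<n. (real n - 2 * real k - 1) * f k)" using Suc.IH[OF m'] .
  finally have "Tf (Suc n) f = (\<Sum>k<n. (real n - 2 * real k - 1) * f k) + (\<Sum>i<n. f i) - real n * f n"
    by (simp add: sum_subtractf)
  also have "\<dots> = (\<Sum>k<n. (real (Suc n) - 2 * real k - 1) * f k) + (real (Suc n) - 2 * real n - 1) * f n"
  proof -
    have "(\<Sum>k<n. (real (Suc n) - 2 * real k - 1) * f k) = (\<Sum>k<n. (real n - 2 * real k - 1) * f k + f k)"
      by (intro sum.cong) (auto simp: algebra_simps)
    also have "\<dots> = (\<Sum>k<n. (real n - 2 * real k - 1) * f k) + (\<Sum>k<n. f k)" by (rule sum.distrib)
    finally show ?thesis by (simp add: algebra_simps)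
  qed
  finally show ?case by simp
qed

lemma rearrange:
  fixes s t :: "nat \<Rightarrow> real"
  assumes sm: "\<forall>i. Suc i < n \<longrightarrow> s (Suc i) \<le> s i"
  shows "\<exists>\<pi>. \<pi> permutes {..<n} \<and> (\<forall>i. Suc i < n \<longrightarrow> t (\<pi> (Suc i)) \<le> t (\<pi> i))
            \<and> (\<Sum>i<n. t i * s i) \<le> (\<Sum>i<n. t (\<pi> i) * s i)"
  using sm
proof (induction n arbitrary: t)
  case 0 then show ?case by (intro exI[of _ id]) (auto simp: permutes_id)
next
  case (Suc n)
  have fin: "finite (t ` {..n})" and ne: "t ` {..n} \<noteq> {}" by auto
  obtain p where p: "p \<le> n" "t p = Min (t ` {..n})" using Min_in[OF fin ne] by (metis atMost_iff imageE)
  have pmin: "t p \<le> t i" if "i \<le> n" for i using p(2) fin that by simp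
  define \<tau> where "\<tau> = Transposition.transpose p n"
  have \<tau>p: "\<tau> permutes {..<Suc n}" unfolding \<tau>_def using p by (intro permutes_swap_id) auto
  define t' where "t' = (\<lambda>i. t (\<tau> i))"
  have gain: "(\<Sum>i<Suc n. t i * s i) \<le> (\<Sum>i<Suc n. t' i * s i)"
  proof (cases "p = n")
    case True then show ?thesis unfolding t'_def \<tau>_def by simp
  next
    case False
    then have pn: "p < n" using p by simp
    let ?g = "\<lambda>i. (t' i - t i) * s i"
    have "(\<Sum>i<Suc n. ?g i) = ?g n + (\<Sum>i\<in>{..<Suc n} - {n}. ?g i)"
      by (rule sum.remove) auto
    also have "(\<Sum>i\<in>{..<Suc n} - {n}. ?g i) = ?g p + (\<Sum>i\<in>{..<Suc n} - {n} - {p}. ?g i)"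
      by (rule sum.remove) (use pn in auto)
    also have "(\<Sum>i\<in>{..<Suc n} - {n} - {p}. ?g i) = 0"
      by (rule sum.neutral) (auto simp: t'_def \<tau>_def)
    also have "?g n + (?g p + 0) = (t n - t p) * (s p - s n)"
      unfolding t'_def \<tau>_def using pn by (simp add: algebra_simps)
    also have "\<dots> \<ge> 0"
      using pmin[of n] mono_gen[OF Suc.prems, of p n] pn by simp
    finally have "0 \<le> (\<Sum>i<Suc n. ?g i)" .
    then show ?thesis by (simp add: sum_subtractf algebra_simps)
  qed
  have sm': "\<forall>i. Suc i < n \<longrightarrow> s (Suc i) \<le> s i" using Suc.prems by simp
  obtain \<pi>' where \<pi>': "\<pi>' permutes {..<n}" "\<forall>i. Suc i < n \<longrightarrow> t' (\<pi>' (Suc i)) \<le> t' (\<pi>' i)"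
     "(\<Sum>i<n. t' i * s i) \<le> (\<Sum>i<n. t' (\<pi>' i) * s i)"
    using Suc.IH[OF sm', of t'] by blast
  have \<pi>'S: "\<pi>' permutes {..<Suc n}" using permutes_subset[OF \<pi>'(1)] by auto
  have \<pi>'n: "\<pi>' n = n" using \<pi>'(1) unfolding permutes_def by auto
  define \<pi> where "\<pi> = \<tau> \<circ> \<pi>'"
  have \<pi>p: "\<pi> permutes {..<Suc n}" unfolding \<pi>_def by (rule permutes_compose[OF \<pi>'S \<tau>p])
  show ?case
  proof (intro exI[of _ \<pi>] conjI \<pi>p allI impI)
    fix i assume i: "Suc i < Suc n"
    show "t (\<pi> (Suc i)) \<le> t (\<pi> i)"
    proof (cases "Suc i < n")
      case True then show ?thesis using \<pi>'(2) unfolding \<pi>_def t'_def by simp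
    next
      case False
      then have "Suc i = n" using i by simp
      then have "t (\<pi> (Suc i)) = t p" unfolding \<pi>_def using \<pi>'n by (simp add: \<tau>_def)
      moreover have "\<pi> i \<le> n"
        using permutes_in_image[OF \<pi>p, of i] i by simp
      ultimately show ?thesis using pmin by simp
    qed
  next
    have "(\<Sum>i<Suc n. t (\<pi> i) * s i) = (\<Sum>i<n. t' (\<pi>' i) * s i) + t' n * s n"
      unfolding \<pi>_def t'_def using \<pi>'n by simp
    also have "\<dots> \<ge> (\<Sum>i<n. t' i * s i) + t' n * s n" using \<pi>'(3) by simp
    finally show "(\<Sum>i<Suc n. t i * s i) \<le> (\<Sum>i<Suc n. t (\<pi> i) * s i)" using gain by simp
  qed
qed


definition pmat :: "nat \<Rightarrow> (nat \<Rightarrow> nat) \<Rightarrow> real mat" where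
  "pmat n \<sigma> = mat n n (\<lambda>(i, j). if \<sigma> i = j then 1 else 0)"

lemma pmat_carrier[simp]: "pmat n \<sigma> \<in> carrier_mat n n"
  unfolding pmat_def by simp

lemma pmat_mult:
  assumes s: "\<sigma> permutes {..<n}" and z: "z \<in> carrier_vec n" and i: "i < n"
  shows "(pmat n \<sigma> *\<^sub>v z) $ i = z $ (\<sigma> i)"
proof -
  have si: "\<sigma> i < n" using permutes_in_image[OF s] i by simp
  have "(pmat n \<sigma> *\<^sub>v z) $ i = (\<Sum>j\<in>{0..<n}. (if \<sigma> i = j then 1 else 0) * z$j)"
    using i z by (simp add: pmat_def scalar_prod_def row_def)
  also have "\<dots> = (\<Sum>j\<in>{0..<n}. if j = \<sigma> i then z$j else 0)" by (intro sum.cong) auto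
  also have "\<dots> = z $ (\<sigma> i)" using si by simp
  finally show ?thesis .
qed

lemma pmatT_mult:
  assumes s: "\<sigma> permutes {..<n}" and z: "z \<in> carrier_vec n" and i: "i < n"
  shows "(transpose_mat (pmat n \<sigma>) *\<^sub>v z) $ i = z $ (Hilbert_Choice.inv \<sigma> i)"
proof -
  have si: "Hilbert_Choice.inv \<sigma> i < n" using permutes_in_image[OF permutes_inv[OF s]] i by simp
  have "(transpose_mat (pmat n \<sigma>) *\<^sub>v z) $ i = (\<Sum>j\<in>{0..<n}. (if \<sigma> j = i then 1 else 0) * z$j)"
    using i z by (simp add: pmat_def scalar_prod_def row_def)
  also have "\<dots> = (\<Sum>j\<in>{0..<n}. if j = Hilbert_Choice.inv \<sigma> i then z$j else 0)"
  proof (rule sum.cong[OF refl])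
    fix j
    have "(\<sigma> j = i) = (j = Hilbert_Choice.inv \<sigma> i)" using permutes_inv_eq[OF s, of i j] by metis
    then show "(if \<sigma> j = i then 1 else 0) * z$j = (if j = Hilbert_Choice.inv \<sigma> i then z$j else 0)" by simp
  qed
  also have "\<dots> = z $ (Hilbert_Choice.inv \<sigma> i)" using si by simp
  finally show ?thesis .
qed

lemma wvec_index: "i < n \<Longrightarrow> wvec n $ i = real n - 2 * real i - 1"
  unfolding wvec_def by simp

lemma wvec_carrier[simp]: "wvec n \<in> carrier_vec n"
  unfolding wvec_def by simp

lemma Sobj_eq:
  assumes z: "z \<in> carrier_vec n" and y: "y \<in> carrier_vec n"
  shows "Sobj n \<rho> y z = (\<Sum>i<n. (z$i - y$i)^2) / 2 + \<rho> * Tf n (\<lambda>i. z$i)"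
proof -
  have "(vnorm (z - y))^2 = (\<Sum>i<n. (z$i - y$i)^2)"
    using vnorm_diff[OF z y] by (simp add: sum_nonneg)
  then show ?thesis unfolding Sobj_def Tf_def by simp
qed

lemma Sobj_strict:
  assumes a: "a \<in> carrier_vec n" and b: "b \<in> carrier_vec n" and y: "y \<in> carrier_vec n"
    and rho: "\<rho> \<ge> 0" and ne: "a \<noteq> b"
  shows "\<exists>m\<in>carrier_vec n. 2 * Sobj n \<rho> y m < Sobj n \<rho> y a + Sobj n \<rho> y b"
proof -
  define m where "m = vec n (\<lambda>i. (a$i + b$i) / 2)"
  have mc: "m \<in> carrier_vec n" unfolding m_def by simp
  have mi: "m$i = (a$i + b$i) / 2" if "i < n" for i using that unfolding m_def by simp
  obtain k where k: "k < n" "a$k \<noteq> b$k" using ne a b by (metis carrier_vecD eq_vecI)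
  have q: "2 * (\<Sum>i<n. (m$i - y$i)^2) = (\<Sum>i<n. (a$i - y$i)^2) + (\<Sum>i<n. (b$i - y$i)^2) - (\<Sum>i<n. (a$i - b$i)^2) / 2"
  proof -
    have "2 * (\<Sum>i<n. (m$i - y$i)^2) = (\<Sum>i<n. (a$i - y$i)^2 + (b$i - y$i)^2 - (a$i - b$i)^2 / 2)"
      unfolding sum_distrib_left by (intro sum.cong refl) (simp add: mi power2_eq_square field_simps)
    then show ?thesis by (simp add: sum.distrib sum_subtractf sum_divide_distrib)
  qed
  have pos: "(\<Sum>i<n. (a$i - b$i)^2) > 0"
  proof -
    have "(a$k - b$k)^2 > 0" using k by simp
    moreover have "(a$k - b$k)^2 \<le> (\<Sum>i<n. (a$i - b$i)^2)" using k by (intro member_le_sum) auto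
    ultimately show ?thesis by linarith
  qed
  have T: "2 * Tf n (\<lambda>i. m$i) \<le> Tf n (\<lambda>i. a$i) + Tf n (\<lambda>i. b$i)"
  proof -
    have "2 * Tf n (\<lambda>i. m$i) = (\<Sum>j<n. \<Sum>i<j. 2 * \<bar>m$i - m$j\<bar>)" unfolding Tf_def by (simp add: sum_distrib_left)
    also have "\<dots> \<le> (\<Sum>j<n. \<Sum>i<j. \<bar>a$i - a$j\<bar> + \<bar>b$i - b$j\<bar>)"
    proof (intro sum_mono)
      fix j i assume "j \<in> {..<n}" "i \<in> {..<j}"
      then have "i < n" "j < n" by auto
      then have "m$i - m$j = ((a$i - a$j) + (b$i - b$j)) / 2" by (simp add: mi field_simps)
      then have "2 * \<bar>m$i - m$j\<bar> = \<bar>(a$i - a$j) + (b$i - b$j)\<bar>"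
      proof -
        have "\<bar>m$i - m$j\<bar> = \<bar>(a$i - a$j) + (b$i - b$j)\<bar> / 2" unfolding \<open>m$i - m$j = _\<close> by (simp add: abs_divide)
        then show ?thesis by simp
      qed
      also have "\<dots> \<le> \<bar>a$i - a$j\<bar> + \<bar>b$i - b$j\<bar>" by (rule abs_triangle_ineq)
      finally show "2 * \<bar>m$i - m$j\<bar> \<le> \<bar>a$i - a$j\<bar> + \<bar>b$i - b$j\<bar>" .
    qed
    also have "\<dots> = Tf n (\<lambda>i. a$i) + Tf n (\<lambda>i. b$i)" unfolding Tf_def by (simp add: sum.distrib)
    finally show ?thesis .
  qed
  have "2 * Sobj n \<rho> y m < Sobj n \<rho> y a + Sobj n \<rho> y b"
    unfolding Sobj_eq[OF mc y] Sobj_eq[OF a y] Sobj_eq[OF b y]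
    using q pos mult_left_mono[OF T rho] by (simp add: algebra_simps)
  then show ?thesis using mc by blast
qed

lemma Srho_unique:
  assumes y: "y \<in> carrier_vec n" and rho: "\<rho> \<ge> 0"
    and a: "a \<in> carrier_vec n" "\<forall>z\<in>carrier_vec n. Sobj n \<rho> y a \<le> Sobj n \<rho> y z"
    and b: "b \<in> carrier_vec n" "\<forall>z\<in>carrier_vec n. Sobj n \<rho> y b \<le> Sobj n \<rho> y z"
  shows "a = b"
proof (rule ccontr)
  assume "a \<noteq> b"
  then obtain m where m: "m \<in> carrier_vec n" "2 * Sobj n \<rho> y m < Sobj n \<rho> y a + Sobj n \<rho> y b"
    using Sobj_strict[OF a(1) b(1) y rho] by blast
  have "Sobj n \<rho> y a \<le> Sobj n \<rho> y m" "Sobj n \<rho> y b \<le> Sobj n \<rho> y m" using a b m(1) by auto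
  then show False using m(2) by linarith
qed


lemma wvec_dim[simp]: "dim_vec (wvec n) = n" unfolding wvec_def by simp
lemma pmat_dims[simp]: "dim_row (pmat n \<sigma>) = n" "dim_col (pmat n \<sigma>) = n" unfolding pmat_def by simp_all

lemma quad_id:
  fixes q s w :: "nat \<Rightarrow> real"
  shows "(\<Sum>i<n. (q i - s i)^2) / 2 + \<rho> * (\<Sum>i<n. w i * q i)
       = (\<Sum>i<n. (q i - (s i - \<rho> * w i))^2) / 2 + (\<rho> * (\<Sum>i<n. w i * s i) - \<rho>^2 * (\<Sum>i<n. (w i)^2) / 2)"
proof -
  have "(\<Sum>i<n. (q i - s i)^2 / 2 + \<rho> * (w i * q i))
      = (\<Sum>i<n. (q i - (s i - \<rho> * w i))^2 / 2 + (\<rho> * (w i * s i) - \<rho>^2 * (w i)^2 / 2))"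
    by (intro sum.cong refl) (simp add: power2_eq_square field_simps)
  then show ?thesis
    by (simp add: sum.distrib sum_subtractf sum_distrib_left sum_divide_distrib)
qed

lemma Srho_red:
  assumes s: "\<sigma> permutes {..<n}" and y: "y \<in> carrier_vec n"
    and sD: "pmat n \<sigma> *\<^sub>v y \<in> Dset n" and rho: "\<rho> \<ge> 0"
  shows "Srho n \<rho> y = transpose_mat (pmat n \<sigma>) *\<^sub>v projD n (pmat n \<sigma> *\<^sub>v y - \<rho> \<cdot>\<^sub>v wvec n)"
proof -
  let ?P = "pmat n \<sigma>"
  define sf where "sf = (\<lambda>i. y $ (\<sigma> i))"
  define wf where "wf = (\<lambda>i. real n - 2 * real i - 1)"
  define v where "v = ?P *\<^sub>v y - \<rho> \<cdot>\<^sub>v wvec n"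
  have vc: "v \<in> carrier_vec n" unfolding v_def carrier_vec_def by (simp add: pmat_def wvec_def)
  have vi: "v $ i = sf i - \<rho> * wf i" if "i < n" for i
    unfolding v_def sf_def wf_def using that y pmat_mult[OF s y that] wvec_index[OF that] by simp
  have sfm: "\<forall>i. Suc i < n \<longrightarrow> sf (Suc i) \<le> sf i"
    using Dset_mono[OF sD] pmat_mult[OF s y] unfolding sf_def by simp
  define x where "x = projD n v"
  have kk: "kkt n v x" unfolding x_def by (rule proj_kkt[OF vc])
  have xD: "x \<in> Dset n" using kk unfolding kkt_def by simp
  have xc: "x \<in> carrier_vec n" using Dset_carrier[OF xD] .
  define xh where "xh = transpose_mat ?P *\<^sub>v x"
  have xhc: "xh \<in> carrier_vec n" unfolding xh_def carrier_vec_def by simp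
  have xhi: "xh $ k = x $ (Hilbert_Choice.inv \<sigma> k)" if "k < n" for k
    unfolding xh_def using pmatT_mult[OF s xc that] .
  define C where "C = \<rho> * (\<Sum>i<n. wf i * sf i) - \<rho>^2 * (\<Sum>i<n. (wf i)^2) / 2"
  define val where "val = (\<Sum>i<n. (x$i - sf i)^2) / 2 + \<rho> * Tf n (\<lambda>i. x$i)"
  have si: "\<sigma> i < n" if "i < n" for i using permutes_in_image[OF s] that by simp
  have A: "Sobj n \<rho> y xh = val"
  proof -
    have "(\<Sum>k<n. (xh$k - y$k)^2) = (\<Sum>k<n. (x$(Hilbert_Choice.inv \<sigma> k) - y$k)^2)"
      by (intro sum.cong refl) (simp add: xhi)
    also have "\<dots> = (\<Sum>i<n. (x$(Hilbert_Choice.inv \<sigma> (\<sigma> i)) - y$(\<sigma> i))^2)"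
      by (rule sum_perm[OF s, of "\<lambda>k. (x$(Hilbert_Choice.inv \<sigma> k) - y$k)^2", symmetric])
    also have "\<dots> = (\<Sum>i<n. (x$i - sf i)^2)"
      unfolding sf_def permutes_inverses(2)[OF s] ..
    finally have 1: "(\<Sum>k<n. (xh$k - y$k)^2) = (\<Sum>i<n. (x$i - sf i)^2)" .
    have "Tf n (\<lambda>k. xh$k) = Tf n (\<lambda>k. x$(Hilbert_Choice.inv \<sigma> k))" by (rule Tf_cong) (simp add: xhi)
    also have "\<dots> = Tf n (\<lambda>k. x$k)" by (rule Tf_perm[OF permutes_inv[OF s]])
    finally show ?thesis unfolding Sobj_eq[OF xhc y] val_def 1 by simp
  qed
  have B: "val \<le> Sobj n \<rho> y z" if z: "z \<in> carrier_vec n" for z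
  proof -
    define t where "t = (\<lambda>i. z $ (\<sigma> i))"
    have 1: "(\<Sum>k<n. (z$k - y$k)^2) = (\<Sum>i<n. (t i - sf i)^2)"
      unfolding t_def sf_def by (rule sum_perm[OF s, of "\<lambda>k. (z$k - y$k)^2", symmetric])
    have 2: "Tf n (\<lambda>k. z$k) = Tf n t" unfolding t_def by (rule Tf_perm[OF s, symmetric])
    obtain \<pi> where \<pi>: "\<pi> permutes {..<n}" "\<forall>i. Suc i < n \<longrightarrow> t (\<pi> (Suc i)) \<le> t (\<pi> i)"
      "(\<Sum>i<n. t i * sf i) \<le> (\<Sum>i<n. t (\<pi> i) * sf i)"
      using rearrange[OF sfm, of t] by blast
    define r where "r = (\<lambda>i. t (\<pi> i))"
    have rr: "(\<Sum>i<n. (r i)^2) = (\<Sum>i<n. (t i)^2)" unfolding r_def by (rule sum_perm[OF \<pi>(1)])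
    have 3: "(\<Sum>i<n. (r i - sf i)^2) \<le> (\<Sum>i<n. (t i - sf i)^2)"
    proof -
      have e: "(\<Sum>i<n. (q i - sf i)^2) = (\<Sum>i<n. (q i)^2) - 2 * (\<Sum>i<n. q i * sf i) + (\<Sum>i<n. (sf i)^2)" for q
        by (simp add: power2_eq_square algebra_simps sum.distrib sum_subtractf sum_distrib_left)
      show ?thesis unfolding e[of r] e[of t] rr using \<pi>(3) unfolding r_def by simp
    qed
    have 4: "Tf n r = Tf n t" unfolding r_def by (rule Tf_perm[OF \<pi>(1)])
    have rm: "\<forall>i. Suc i < n \<longrightarrow> r (Suc i) \<le> r i" using \<pi>(2) unfolding r_def by simp
    have 5: "Tf n r = (\<Sum>i<n. wf i * r i)" unfolding Tf_sorted[OF rm] wf_def ..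
    define rv where "rv = vec n r"
    have rvD: "rv \<in> Dset n" unfolding rv_def Dset_def using rm by auto
    have 6: "(\<Sum>i<n. (x$i - v$i)^2) \<le> (\<Sum>i<n. (r i - v$i)^2)"
    proof -
      have "(\<Sum>i<n. (x$i - v$i)^2) + (\<Sum>i<n. (rv$i - x$i)^2) \<le> (\<Sum>i<n. (rv$i - v$i)^2)"
        by (rule kkt_ineq[OF kk rvD])
      moreover have "(\<Sum>i<n. (rv$i - v$i)^2) = (\<Sum>i<n. (r i - v$i)^2)"
        by (intro sum.cong refl) (simp add: rv_def)
      moreover have "0 \<le> (\<Sum>i<n. (rv$i - x$i)^2)" by (rule sum_nonneg) simp
      ultimately show ?thesis by linarith
    qed
    have xm: "\<forall>i. Suc i < n \<longrightarrow> x$(Suc i) \<le> x$i" using Dset_mono[OF xD] by simp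
    have 7: "Tf n (\<lambda>i. x$i) = (\<Sum>i<n. wf i * x$i)" unfolding Tf_sorted[OF xm] wf_def ..
    have vv: "(\<Sum>i<n. (q i - v$i)^2) = (\<Sum>i<n. (q i - (sf i - \<rho> * wf i))^2)" for q
      by (intro sum.cong refl) (simp add: vi)
    have "val = (\<Sum>i<n. (x$i - sf i)^2) / 2 + \<rho> * (\<Sum>i<n. wf i * x$i)" unfolding val_def 7 ..
    also have "\<dots> = (\<Sum>i<n. (x$i - v$i)^2) / 2 + C" unfolding quad_id vv C_def ..
    also have "\<dots> \<le> (\<Sum>i<n. (r i - v$i)^2) / 2 + C" using 6 by simp
    also have "\<dots> = (\<Sum>i<n. (r i - sf i)^2) / 2 + \<rho> * (\<Sum>i<n. wf i * r i)" unfolding quad_id vv C_def ..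
    also have "\<dots> = (\<Sum>i<n. (r i - sf i)^2) / 2 + \<rho> * Tf n t" unfolding 5[symmetric] 4 ..
    also have "\<dots> \<le> (\<Sum>i<n. (t i - sf i)^2) / 2 + \<rho> * Tf n t" using 3 by simp
    also have "\<dots> = Sobj n \<rho> y z" unfolding Sobj_eq[OF z y] 1 2 ..
    finally show ?thesis .
  qed
  have "Srho n \<rho> y = xh"
    unfolding Srho_def
  proof (rule the_equality)
    show "xh \<in> carrier_vec n \<and> (\<forall>z\<in>carrier_vec n. Sobj n \<rho> y xh \<le> Sobj n \<rho> y z)"
      using xhc A B by simp
    fix a assume a: "a \<in> carrier_vec n \<and> (\<forall>z\<in>carrier_vec n. Sobj n \<rho> y a \<le> Sobj n \<rho> y z)"
    show "a = xh"
      by (rule Srho_unique[OF y rho]) (use a xhc A B in auto)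
  qed
  then show ?thesis unfolding xh_def x_def v_def .
qed


lemma tie_lam:
  assumes sD: "s \<in> Dset n" and rho: "\<rho> > 0" and c: "Suc c < n" and eq: "s$c = s$Suc c"
  shows "Lam n (s - \<rho> \<cdot>\<^sub>v wvec n) $ c \<noteq> 0"
proof
  define v where "v = s - \<rho> \<cdot>\<^sub>v wvec n"
  have sc: "s \<in> carrier_vec n" using Dset_carrier[OF sD] .
  have vc: "v \<in> carrier_vec n" unfolding v_def carrier_vec_def by simp
  let ?x = "projD n v"
  have kk: "kkt n v ?x" using proj_kkt[OF vc] .
  have xD: "?x \<in> Dset n" using kk unfolding kkt_def by simp
  define L where "L = (\<lambda>k. \<Sum>j<Suc k. v$j - ?x$j)"
  have kk1: "\<forall>k<n-1. (\<Sum>j<Suc k. v$j - ?x$j) \<le> 0" using kk unfolding kkt_def by blast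
  have Lle: "L k \<le> 0" if "k < n - 1" for k unfolding L_def using kk1 that by blast
  assume "Lam n (s - \<rho> \<cdot>\<^sub>v wvec n) $ c = 0"
  then have z: "Lam n v $ c = 0" unfolding v_def .
  have cn: "c < n - 1" using c by simp
  have "Lam n v $ c = L c" unfolding L_def by (rule Lam_index[OF cn])
  then have L0: "L c = 0" using z by simp
  have h1: "v$c - ?x$c \<ge> 0"
  proof (cases c)
    case 0 then show ?thesis using L0 unfolding L_def by simp
  next
    case (Suc c')
    have "L c = L c' + (v$c - ?x$c)" unfolding L_def Suc by simp
    moreover have "L c' \<le> 0" using Lle[of c'] Suc c by simp
    ultimately show ?thesis using L0 by simp
  qed
  have h2: "v$Suc c - ?x$Suc c \<le> 0"
  proof (cases "Suc c < n - 1")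
    case True
    have "L (Suc c) = L c + (v$Suc c - ?x$Suc c)" unfolding L_def by simp
    then show ?thesis using Lle[OF True] L0 by simp
  next
    case False
    then have nn: "n = Suc (Suc c)" using c by simp
    have "(\<Sum>j<n. v$j - ?x$j) = 0" using kk unfolding kkt_def by blast
    moreover have "(\<Sum>j<n. v$j - ?x$j) = L c + (v$Suc c - ?x$Suc c)" unfolding nn L_def by simp
    ultimately show ?thesis using L0 by simp
  qed
  have h3: "?x$Suc c \<le> ?x$c" using Dset_mono[OF xD c] .
  have "v$Suc c - v$c = 2 * \<rho>"
  proof -
    have "v$Suc c = s$Suc c - \<rho> * (real n - 2 * real (Suc c) - 1)" "v$c = s$c - \<rho> * (real n - 2 * real c - 1)"
      unfolding v_def using c sc wvec_index[of "Suc c" n] wvec_index[of c n] by auto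
    then show ?thesis using eq by (simp add: algebra_simps)
  qed
  then show False using h1 h2 h3 rho by simp
qed

lemma tie_chain:
  fixes s t :: "nat \<Rightarrow> real"
  assumes sm: "\<forall>i. Suc i < n \<longrightarrow> s (Suc i) \<le> s i"
    and hK: "\<forall>c. Suc c < n \<longrightarrow> s c = s (Suc c) \<longrightarrow> t c = t (Suc c)"
    and ab: "a \<le> b" "b < n" "s a = s b"
  shows "t a = t b"
  using ab
proof (induction b)
  case 0 then show ?case by simp
next
  case (Suc b)
  show ?case
  proof (cases "a = Suc b")
    case True then show ?thesis by simp
  next
    case False
    then have ab': "a \<le> b" using Suc.prems by simp
    have "s b \<le> s a" using mono_gen[OF sm ab'] Suc.prems by simp
    moreover have "s (Suc b) \<le> s b" using sm Suc.prems by simp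
    ultimately have e: "s a = s b" "s b = s (Suc b)" using Suc.prems by auto
    have "t a = t b" using Suc.IH[OF ab'] e Suc.prems by simp
    moreover have "t b = t (Suc b)" using hK e Suc.prems by simp
    ultimately show ?thesis by simp
  qed
qed

lemma tie_eq:
  fixes s t :: "nat \<Rightarrow> real"
  assumes sm: "\<forall>i. Suc i < n \<longrightarrow> s (Suc i) \<le> s i"
    and hK: "\<forall>c. Suc c < n \<longrightarrow> s c = s (Suc c) \<longrightarrow> t c = t (Suc c)"
    and ab: "a < n" "b < n" "s a = s b"
  shows "t a = t b"
proof (cases "a \<le> b")
  case True then show ?thesis using tie_chain[OF sm hK True] ab by simp
next
  case False
  then have "b \<le> a" by simp
  then show ?thesis using tie_chain[OF sm hK, of b a] ab by simp
qed

lemma sorted_perm_unique: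
  fixes f :: "nat \<Rightarrow> real"
  assumes s: "\<sigma> permutes {..<n}" and t: "\<tau> permutes {..<n}"
    and ms: "\<forall>i. Suc i < n \<longrightarrow> f (\<sigma> (Suc i)) \<le> f (\<sigma> i)"
    and mt: "\<forall>i. Suc i < n \<longrightarrow> f (\<tau> (Suc i)) \<le> f (\<tau> i)"
    and i: "i < n"
  shows "f (\<sigma> i) = f (\<tau> i)"
proof -
  define L where "L = (\<lambda>p. map (\<lambda>k. - f k) (map p [0..<n]))"
  have srt: "sorted (L p)" if p: "\<forall>i. Suc i < n \<longrightarrow> f (p (Suc i)) \<le> f (p i)" for p
    unfolding sorted_iff_nth_mono L_def
    using mono_gen[OF p] by auto
  have ms': "mset (map p [0..<n]) = mset [0..<n]" if p: "p permutes {..<n}" for p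
  proof -
    have "distinct (map p [0..<n])"
      using permutes_inj_on[OF p] by (simp add: distinct_map inj_on_subset)
    moreover have "set (map p [0..<n]) = set [0..<n]"
      using permutes_image[OF p] by (simp add: atLeast0LessThan)
    ultimately show ?thesis using set_eq_iff_mset_eq_distinct[of "map p [0..<n]" "[0..<n]"] by simp
  qed
  have e: "mset (map \<sigma> [0..<n]) = mset (map \<tau> [0..<n])" using ms'[OF s] ms'[OF t] by simp
  have "mset (L \<sigma>) = mset (L \<tau>)" unfolding L_def using e by (metis mset_map)
  then have "sort (L \<tau>) = L \<sigma>" using properties_for_sort srt[OF ms] by blast
  moreover have "sort (L \<tau>) = L \<tau>" using sorted_sort_id srt[OF mt] by blast
  ultimately have "L \<sigma> = L \<tau>" by simp
  then have "L \<sigma> ! i = L \<tau> ! i" by simp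
  then show ?thesis unfolding L_def using i by simp
qed

lemma mat_eq_vec:
  fixes A B :: "real mat"
  assumes A: "A \<in> carrier_mat n n" and B: "B \<in> carrier_mat n n"
    and h: "\<forall>z\<in>carrier_vec n. A *\<^sub>v z = B *\<^sub>v z"
  shows "A = B"
proof (rule eq_matI)
  have col: "(M *\<^sub>v unit_vec n j) $ i = M $$ (i, j)" if M: "M \<in> carrier_mat n n" and i: "i < n" and j: "j < n" for M :: "real mat" and i j
  proof -
    have "(M *\<^sub>v unit_vec n j) $ i = (\<Sum>k\<in>{0..<n}. M $$ (i,k) * unit_vec n j $ k)"
      using M i by (simp add: scalar_prod_def row_def)
    also have "\<dots> = (\<Sum>k\<in>{0..<n}. if k = j then M $$ (i,k) else 0)"
      by (intro sum.cong refl) (auto simp: unit_vec_def)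
    also have "\<dots> = M $$ (i, j)" using j by simp
    finally show ?thesis .
  qed
  fix i j assume "i < dim_row B" "j < dim_col B"
  then have i: "i < n" and j: "j < n" using B by auto
  have "A *\<^sub>v unit_vec n j = B *\<^sub>v unit_vec n j" using h by simp
  then show "A $$ (i, j) = B $$ (i, j)" using col[OF A i j] col[OF B i j] by simp
qed (use A B in auto)


lemma perm_pmat:
  assumes "perm_matrix n M"
  obtains \<sigma> where "\<sigma> permutes {..<n}" "M = pmat n \<sigma>"
  using assms unfolding perm_matrix_def pmat_def by blast

lemma pmat_norm:
  assumes s: "\<sigma> permutes {..<n}" and d: "d \<in> carrier_vec n"
  shows "vnorm (pmat n \<sigma> *\<^sub>v d) = vnorm d"
proof -
  have c: "pmat n \<sigma> *\<^sub>v d \<in> carrier_vec n" unfolding carrier_vec_def by simp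
  have "(\<Sum>i<n. ((pmat n \<sigma> *\<^sub>v d) $ i)^2) = (\<Sum>i<n. (d $ (\<sigma> i))^2)"
    by (rule sum.cong[OF refl], subst pmat_mult[OF s d]) auto
  also have "\<dots> = (\<Sum>i<n. (d $ i)^2)" by (rule sum_perm[OF s])
  finally show ?thesis unfolding vnorm_sum[OF c] vnorm_sum[OF d] by simp
qed

lemma pmat_diff:
  assumes a: "a \<in> carrier_vec n" and b: "b \<in> carrier_vec n" and c: "c \<in> carrier_vec n"
  shows "(pmat n \<sigma> *\<^sub>v a - c) - (pmat n \<sigma> *\<^sub>v b - c) = pmat n \<sigma> *\<^sub>v (a - b)"
proof -
  have "pmat n \<sigma> *\<^sub>v (a - b) = pmat n \<sigma> *\<^sub>v a - pmat n \<sigma> *\<^sub>v b"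
    by (rule mult_minus_distrib_mat_vec[OF pmat_carrier a b])
  then show ?thesis using a b c by (intro eq_vecI) auto
qed

lemma QD_eq: "QD n w = QK n ` KD n w"
  unfolding QD_def QK_def Minv_def by auto

lemma KD_sub: "v \<in> carrier_vec n \<Longrightarrow> K \<in> KD n v \<Longrightarrow> K \<subseteq> {..<n-1}"
  unfolding KD_eq ID_def by auto

lemma vec_eq_of_diff:
  fixes a b :: "real vec"
  assumes "a \<in> carrier_vec n" "b \<in> carrier_vec n" "a - b = 0\<^sub>v n"
  shows "a = b"
proof (rule eq_vecI)
  fix i assume "i < dim_vec b"
  then have i: "i < n" using assms by simp
  have e: "(a - b) $ i = a$i - b$i" using i assms(2) by simp
  have "(a - b) $ i = 0" by (simp add: assms(3) i)
  then have "a $ i - b $ i = 0" using e by simp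
  then show "a $ i = b $ i" by simp
qed (use assms in auto)


lemma pmat_vec_carrier[simp]: "pmat n \<sigma> *\<^sub>v z \<in> carrier_vec n" "transpose_mat (pmat n \<sigma>) *\<^sub>v z \<in> carrier_vec n"
  unfolding carrier_vec_def by simp_all

lemma conj_eq:
  assumes s: "\<sigma> permutes {..<n}" and t: "\<tau> permutes {..<n}" and y: "y \<in> carrier_vec n"
    and yst: "\<forall>i<n. y$(\<sigma> i) = y$(\<tau> i)"
    and sD: "pmat n \<sigma> *\<^sub>v y \<in> Dset n" and rho: "\<rho> > 0"
    and K: "K \<subseteq> {..<n-1}" and sK: "vsupp (Lam n (pmat n \<sigma> *\<^sub>v y - \<rho> \<cdot>\<^sub>v wvec n)) \<subseteq> K"
  shows "transpose_mat (pmat n \<tau>) * QK n K * pmat n \<tau> = transpose_mat (pmat n \<sigma>) * QK n K * pmat n \<sigma>"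
proof -
  let ?A = "pmat n \<tau>" and ?B = "pmat n \<sigma>" and ?Q = "QK n K"
  define sf where "sf = (\<lambda>i. y $ (\<sigma> i))"
  have sfi: "(?B *\<^sub>v y) $ i = sf i" if "i < n" for i unfolding sf_def using pmat_mult[OF s y that] .
  have sfm: "\<forall>i. Suc i < n \<longrightarrow> sf (Suc i) \<le> sf i"
  proof (intro allI impI)
    fix i assume i1: "Suc i < n"
    then have i0: "i < n" by simp
    have "(?B *\<^sub>v y) $ Suc i \<le> (?B *\<^sub>v y) $ i" by (rule Dset_mono[OF sD i1])
    then show "sf (Suc i) \<le> sf i" unfolding sfi[OF i0] sfi[OF i1] .
  qed
  have inK: "c \<in> K" if c: "Suc c < n" and e: "sf c = sf (Suc c)" for c
  proof -
    have c0: "c < n" using c by simp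
    have "(?B *\<^sub>v y) $ c = (?B *\<^sub>v y) $ Suc c" unfolding sfi[OF c0] sfi[OF c] by (rule e)
    then have "Lam n (?B *\<^sub>v y - \<rho> \<cdot>\<^sub>v wvec n) $ c \<noteq> 0" by (rule tie_lam[OF sD rho c])
    then have "c \<in> vsupp (Lam n (?B *\<^sub>v y - \<rho> \<cdot>\<^sub>v wvec n))" unfolding vsupp_def using c by simp
    then show ?thesis using sK by blast
  qed
  have PT: "transpose_mat ?A *\<^sub>v q = transpose_mat ?B *\<^sub>v q"
    if q: "q \<in> carrier_vec n" and Nq: "\<forall>i\<in>K. q$i = q$Suc i" for q
  proof (rule eq_vecI)
    fix k assume "k < dim_vec (transpose_mat ?B *\<^sub>v q)"
    then have k: "k < n" by simp
    have hK: "\<forall>c. Suc c < n \<longrightarrow> sf c = sf (Suc c) \<longrightarrow> q$c = q$Suc c" using inK Nq by blast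
    let ?a = "Hilbert_Choice.inv \<tau> k" and ?b = "Hilbert_Choice.inv \<sigma> k"
    have an: "?a < n" using permutes_in_image[OF permutes_inv[OF t]] k by simp
    have bn: "?b < n" using permutes_in_image[OF permutes_inv[OF s]] k by simp
    have "sf ?a = y $ k" unfolding sf_def using yst an permutes_inverses(1)[OF t] by simp
    moreover have "sf ?b = y $ k" unfolding sf_def using permutes_inverses(1)[OF s] by simp
    ultimately have "q $ ?a = q $ ?b" using tie_eq[OF sfm hK an bn] by simp
    then show "(transpose_mat ?A *\<^sub>v q) $ k = (transpose_mat ?B *\<^sub>v q) $ k"
      using pmatT_mult[OF t q k] pmatT_mult[OF s q k] by simp
  qed simp
  have Qc: "?Q \<in> carrier_mat n n" using QK_carrier[OF K] .
  show ?thesis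
  proof (rule mat_eq_vec)
    have TA: "transpose_mat ?A \<in> carrier_mat n n" "transpose_mat ?B \<in> carrier_mat n n" by simp_all
    show "transpose_mat ?A * ?Q * ?A \<in> carrier_mat n n" by (rule mult_carrier_mat[OF mult_carrier_mat[OF TA(1) Qc] pmat_carrier])
    show "transpose_mat ?B * ?Q * ?B \<in> carrier_mat n n" by (rule mult_carrier_mat[OF mult_carrier_mat[OF TA(2) Qc] pmat_carrier])
    show "\<forall>z\<in>carrier_vec n. (transpose_mat ?A * ?Q * ?A) *\<^sub>v z = (transpose_mat ?B * ?Q * ?B) *\<^sub>v z"
    proof
      fix z :: "real vec" assume z: "z \<in> carrier_vec n"
      have as: "(transpose_mat M * ?Q * M) *\<^sub>v z = transpose_mat M *\<^sub>v (?Q *\<^sub>v (M *\<^sub>v z))"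
        if M: "M \<in> carrier_mat n n" for M
      proof -
        have "(transpose_mat M * ?Q * M) *\<^sub>v z = (transpose_mat M * ?Q) *\<^sub>v (M *\<^sub>v z)"
          by (rule assoc_mult_mat_vec[of _ n n _ n]) (use M Qc z in auto)
        also have "\<dots> = transpose_mat M *\<^sub>v (?Q *\<^sub>v (M *\<^sub>v z))"
          by (rule assoc_mult_mat_vec[of _ n n _ n]) (use M Qc z in auto)
        finally show ?thesis .
      qed
      let ?a = "?A *\<^sub>v z" and ?b = "?B *\<^sub>v z"
      have ac: "?a \<in> carrier_vec n" and bc: "?b \<in> carrier_vec n" by simp_all
      have orth: "\<forall>tt\<in>carrier_vec n. (\<forall>i\<in>K. tt$i = tt$Suc i) \<longrightarrow> (?a - ?b) \<bullet> tt = 0"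
      proof (intro ballI impI)
        fix tt :: "real vec" assume tt: "tt \<in> carrier_vec n" and Nt: "\<forall>i\<in>K. tt$i = tt$Suc i"
        have "(?a - ?b) \<bullet> tt = ?a \<bullet> tt - ?b \<bullet> tt" by (rule minus_scalar_prod_distrib[OF ac bc tt])
        also have "?a \<bullet> tt = (transpose_mat ?A *\<^sub>v tt) \<bullet> z"
          by (rule trans[OF comm_scalar_prod[OF ac tt] transpose_vec_mult_scalar[OF pmat_carrier z tt, symmetric]])
        also have "?b \<bullet> tt = (transpose_mat ?B *\<^sub>v tt) \<bullet> z"
          by (rule trans[OF comm_scalar_prod[OF bc tt] transpose_vec_mult_scalar[OF pmat_carrier z tt, symmetric]])
        also have "transpose_mat ?A *\<^sub>v tt = transpose_mat ?B *\<^sub>v tt" by (rule PT[OF tt Nt])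
        finally show "(?a - ?b) \<bullet> tt = 0" by simp
      qed
      have e1: "?Q *\<^sub>v (?a - ?b) = 0\<^sub>v n" by (rule QK_kernel[OF K minus_carrier_vec[OF ac bc] orth])
      have e2: "?Q *\<^sub>v (?a - ?b) = ?Q *\<^sub>v ?a - ?Q *\<^sub>v ?b" by (rule mult_minus_distrib_mat_vec[OF Qc ac bc])
      have e3: "?Q *\<^sub>v ?a - ?Q *\<^sub>v ?b = 0\<^sub>v n" using e2[symmetric] e1 by (rule trans)
      have qc: "?Q *\<^sub>v ?a \<in> carrier_vec n" by (rule mult_mat_vec_carrier[OF Qc ac])
      have qbc: "?Q *\<^sub>v ?b \<in> carrier_vec n" by (rule mult_mat_vec_carrier[OF Qc bc])
      have Qab: "?Q *\<^sub>v ?a = ?Q *\<^sub>v ?b" by (rule vec_eq_of_diff[OF qc qbc e3])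
      have "BK n K *\<^sub>v (?Q *\<^sub>v ?a) = 0\<^sub>v (card K)" by (rule QK_range[OF K ac])
      then have Nq: "\<forall>i\<in>K. (?Q *\<^sub>v ?a)$i = (?Q *\<^sub>v ?a)$Suc i" using BK_zero_iff[OF K qc] by simp
      show "(transpose_mat ?A * ?Q * ?A) *\<^sub>v z = (transpose_mat ?B * ?Q * ?B) *\<^sub>v z"
      proof -
        have "(transpose_mat ?A * ?Q * ?A) *\<^sub>v z = transpose_mat ?A *\<^sub>v (?Q *\<^sub>v ?a)" by (rule as[OF pmat_carrier])
        also have "\<dots> = transpose_mat ?B *\<^sub>v (?Q *\<^sub>v ?a)" by (rule PT[OF qc Nq])
        also have "\<dots> = transpose_mat ?B *\<^sub>v (?Q *\<^sub>v ?b)" unfolding Qab ..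
        also have "\<dots> = (transpose_mat ?B * ?Q * ?B) *\<^sub>v z" by (rule as[OF pmat_carrier, symmetric])
        finally show ?thesis .
      qed
    qed
  qed
qed


theorem proposition2p8:
  fixes n :: nat and \<rho> :: real and y :: "real vec" and P :: "real vec \<Rightarrow> real mat"
  assumes P: "\<forall>u \<in> carrier_vec n. perm_matrix n (P u) \<and> P u *\<^sub>v u \<in> Dset n"
    and rho: "\<rho> > 0"
    and y: "y \<in> carrier_vec n"
  shows "\<exists>\<epsilon> > 0. \<forall>u \<in> carrier_vec n. vnorm (u - y) < \<epsilon> \<longrightarrow>
     KD n (P y *\<^sub>v u - \<rho> \<cdot>\<^sub>v wvec n) \<subseteq> KD n (P y *\<^sub>v y - \<rho> \<cdot>\<^sub>v wvec n)
   \<and> QD n (P y *\<^sub>v u - \<rho> \<cdot>\<^sub>v wvec n) \<subseteq> QD n (P y *\<^sub>v y - \<rho> \<cdot>\<^sub>v wvec n)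
   \<and> QS n \<rho> P u \<subseteq> QS n \<rho> P y
   \<and> (\<forall>Qh \<in> QD n (P y *\<^sub>v u - \<rho> \<cdot>\<^sub>v wvec n).
        projD n (P y *\<^sub>v u - \<rho> \<cdot>\<^sub>v wvec n)
          = projD n (P y *\<^sub>v y - \<rho> \<cdot>\<^sub>v wvec n) + Qh *\<^sub>v (P y *\<^sub>v (u - y)))
   \<and> (\<forall>Q \<in> QS n \<rho> P u. Srho n \<rho> u = Srho n \<rho> y + Q *\<^sub>v (u - y))"
proof -
  have Py: "perm_matrix n (P y)" "P y *\<^sub>v y \<in> Dset n" using P y by auto
  obtain \<sigma> where \<sigma>: "\<sigma> permutes {..<n}" "P y = pmat n \<sigma>" using perm_pmat[OF Py(1)] by blast
  have yD: "pmat n \<sigma> *\<^sub>v y \<in> Dset n" using Py(2) \<sigma>(2) by simp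
  let ?w = "\<rho> \<cdot>\<^sub>v wvec n"
  have wc: "?w \<in> carrier_vec n" by simp
  let ?v = "P y *\<^sub>v y - ?w"
  have vc: "?v \<in> carrier_vec n" unfolding \<sigma>(2) carrier_vec_def by simp
  obtain \<delta>1 where d1: "\<delta>1 > 0" and L: "\<forall>v'\<in>carrier_vec n. vnorm (v' - ?v) < \<delta>1 \<longrightarrow>
     KD n v' \<subseteq> KD n ?v \<and> (\<forall>K\<in>KD n v'. vsupp (Lam n ?v) \<subseteq> K \<and>
        projD n v' = projD n ?v + QK n K *\<^sub>v (v' - ?v))"
    using main_local[OF vc] by blast
  define G where "G = (\<lambda>(i,j). \<bar>y$i - y$j\<bar>) ` {(i,j). i < n \<and> j < n \<and> y$i \<noteq> y$j}"
  have finG: "finite G"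
  proof -
    have "{(i,j). i < n \<and> j < n \<and> y$i \<noteq> y$j} \<subseteq> {..<n} \<times> {..<n}" by auto
    then have "finite {(i,j). i < n \<and> j < n \<and> y$i \<noteq> y$j}" by (rule finite_subset) simp
    then show ?thesis unfolding G_def by simp
  qed
  define \<delta>2 where "\<delta>2 = Min (insert 1 G) / 2"
  have Gpos: "\<forall>g\<in>G. g > 0" unfolding G_def by auto
  have "0 < Min (insert 1 G)" using finG Gpos by (subst Min_gr_iff) auto
  then have d2: "\<delta>2 > 0" unfolding \<delta>2_def by simp
  have gap: "2 * \<delta>2 \<le> \<bar>y$i - y$j\<bar>" if "i < n" "j < n" "y$i \<noteq> y$j" for i j
  proof -
    have "\<bar>y$i - y$j\<bar> \<in> G" unfolding G_def using that by force
    then have "Min (insert 1 G) \<le> \<bar>y$i - y$j\<bar>" using finG by simp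
    then show ?thesis unfolding \<delta>2_def by simp
  qed
  show ?thesis
  proof (intro exI[of _ "min \<delta>1 \<delta>2"] conjI ballI impI)
    show "min \<delta>1 \<delta>2 > 0" using d1 d2 by simp
    fix u assume u: "u \<in> carrier_vec n" and uy: "vnorm (u - y) < min \<delta>1 \<delta>2"
    have uyc: "u - y \<in> carrier_vec n" using u y by simp
    have cb: "\<bar>u$i - y$i\<bar> < \<delta>2" if "i < n" for i
      using comp_bound[OF uyc that] uy that u y by simp
    have Pu: "perm_matrix n (P u)" "P u *\<^sub>v u \<in> Dset n" using P u by auto
    obtain \<tau> where \<tau>: "\<tau> permutes {..<n}" "P u = pmat n \<tau>" using perm_pmat[OF Pu(1)] by blast
    have uD: "pmat n \<tau> *\<^sub>v u \<in> Dset n" using Pu(2) \<tau>(2) by simp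
    have mt: "\<forall>i. Suc i < n \<longrightarrow> y$(\<tau> (Suc i)) \<le> y$(\<tau> i)"
    proof (intro allI impI)
      fix i assume i1: "Suc i < n"
      then have i0: "i < n" by simp
      have a: "\<tau> i < n" and b: "\<tau> (Suc i) < n" using permutes_in_image[OF \<tau>(1)] i0 i1 by auto
      show "y$(\<tau> (Suc i)) \<le> y$(\<tau> i)"
      proof (rule ccontr)
        assume "\<not> y$(\<tau> (Suc i)) \<le> y$(\<tau> i)"
        then have lt: "y$(\<tau> i) < y$(\<tau> (Suc i))" by simp
        then have "2 * \<delta>2 \<le> \<bar>y$(\<tau> i) - y$(\<tau> (Suc i))\<bar>" using gap[OF a b] by simp
        moreover have "(pmat n \<tau> *\<^sub>v u) $ Suc i \<le> (pmat n \<tau> *\<^sub>v u) $ i" by (rule Dset_mono[OF uD i1])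
        then have "u $ (\<tau> (Suc i)) \<le> u $ (\<tau> i)" unfolding pmat_mult[OF \<tau>(1) u i0] pmat_mult[OF \<tau>(1) u i1] .
        ultimately show False using cb[OF a] cb[OF b] lt by linarith
      qed
    qed
    have ms: "\<forall>i. Suc i < n \<longrightarrow> y$(\<sigma> (Suc i)) \<le> y$(\<sigma> i)"
    proof (intro allI impI)
      fix i assume i1: "Suc i < n"
      then have i0: "i < n" by simp
      have "(pmat n \<sigma> *\<^sub>v y) $ Suc i \<le> (pmat n \<sigma> *\<^sub>v y) $ i" by (rule Dset_mono[OF yD i1])
      then show "y$(\<sigma> (Suc i)) \<le> y$(\<sigma> i)" unfolding pmat_mult[OF \<sigma>(1) y i0] pmat_mult[OF \<sigma>(1) y i1] .
    qed
    have yst: "\<forall>i<n. y$(\<sigma> i) = y$(\<tau> i)" using sorted_perm_unique[OF \<sigma>(1) \<tau>(1) ms mt] by blast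
    have PP: "pmat n \<tau> *\<^sub>v y = pmat n \<sigma> *\<^sub>v y"
    proof (rule eq_vecI)
      fix i assume "i < dim_vec (pmat n \<sigma> *\<^sub>v y)"
      then have i: "i < n" by simp
      show "(pmat n \<tau> *\<^sub>v y) $ i = (pmat n \<sigma> *\<^sub>v y) $ i"
        unfolding pmat_mult[OF \<tau>(1) y i] pmat_mult[OF \<sigma>(1) y i] using yst i by simp
    qed simp
    let ?v1 = "P y *\<^sub>v u - ?w" and ?v2 = "P u *\<^sub>v u - ?w"
    have v1c: "?v1 \<in> carrier_vec n" unfolding \<sigma>(2) carrier_vec_def by simp
    have v2c: "?v2 \<in> carrier_vec n" unfolding \<tau>(2) carrier_vec_def by simp
    have d1e: "?v1 - ?v = P y *\<^sub>v (u - y)" unfolding \<sigma>(2) by (rule pmat_diff[OF u y wc])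
    have d2e: "?v2 - ?v = P u *\<^sub>v (u - y)"
    proof -
      have "?v = pmat n \<tau> *\<^sub>v y - ?w" unfolding \<sigma>(2) PP ..
      then show ?thesis unfolding \<tau>(2) using pmat_diff[OF u y wc, of \<tau>] by simp
    qed
    have n1: "vnorm (?v1 - ?v) < \<delta>1" unfolding d1e unfolding \<sigma>(2) pmat_norm[OF \<sigma>(1) uyc] using uy by simp
    have n2: "vnorm (?v2 - ?v) < \<delta>1" unfolding d2e unfolding \<tau>(2) pmat_norm[OF \<tau>(1) uyc] using uy by simp
    have L1: "KD n ?v1 \<subseteq> KD n ?v" "\<forall>K\<in>KD n ?v1. vsupp (Lam n ?v) \<subseteq> K \<and> projD n ?v1 = projD n ?v + QK n K *\<^sub>v (?v1 - ?v)"
      using L v1c n1 by blast+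
    have L2: "KD n ?v2 \<subseteq> KD n ?v" "\<forall>K\<in>KD n ?v2. vsupp (Lam n ?v) \<subseteq> K \<and> projD n ?v2 = projD n ?v + QK n K *\<^sub>v (?v2 - ?v)"
      using L v2c n2 by blast+
    show "KD n ?v1 \<subseteq> KD n ?v" by (rule L1(1))
    show "QD n ?v1 \<subseteq> QD n ?v" unfolding QD_eq using L1(1) by (rule image_mono)
    show "projD n ?v1 = projD n ?v + Qh *\<^sub>v (P y *\<^sub>v (u - y))" if Qh1: "Qh \<in> QD n ?v1" for Qh
    proof -
      obtain K where K: "K \<in> KD n ?v1" "Qh = QK n K" using Qh1 unfolding QD_eq by blast
      then show ?thesis using L1(2) d1e by auto
    qed
    have vv: "?v = pmat n \<sigma> *\<^sub>v y - ?w" unfolding \<sigma>(2) ..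
    show "QS n \<rho> P u \<subseteq> QS n \<rho> P y"
    proof
      fix Q assume "Q \<in> QS n \<rho> P u"
      then obtain Qh where Qh: "Q = transpose_mat (P u) * Qh * P u" "Qh \<in> QD n ?v2" unfolding QS_def by blast
      then obtain K where K: "K \<in> KD n ?v2" "Qh = QK n K" unfolding QD_eq by blast
      have KK: "K \<in> KD n ?v" using L2(1) K(1) by blast
      have Ks: "K \<subseteq> {..<n-1}" by (rule KD_sub[OF vc KK])
      have sK: "vsupp (Lam n (pmat n \<sigma> *\<^sub>v y - ?w)) \<subseteq> K" using L2(2) K(1) vv by auto
      have "Q = transpose_mat (P y) * QK n K * P y"
        unfolding Qh(1) K(2) \<tau>(2) \<sigma>(2) by (rule conj_eq[OF \<sigma>(1) \<tau>(1) y yst yD rho Ks sK])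
      moreover have "QK n K \<in> QD n ?v" unfolding QD_eq using KK by blast
      ultimately show "Q \<in> QS n \<rho> P y" unfolding QS_def by blast
    qed
    show "Srho n \<rho> u = Srho n \<rho> y + Q *\<^sub>v (u - y)" if Q1: "Q \<in> QS n \<rho> P u" for Q
    proof -
      obtain Qh where Qh: "Q = transpose_mat (P u) * Qh * P u" "Qh \<in> QD n ?v2" using Q1 unfolding QS_def by blast
      then obtain K where K: "K \<in> KD n ?v2" "Qh = QK n K" unfolding QD_eq by blast
      have Ks: "K \<subseteq> {..<n-1}" by (rule KD_sub[OF v2c K(1)])
      have Qc: "QK n K \<in> carrier_mat n n" by (rule QK_carrier[OF Ks])
      have pr: "projD n ?v2 = projD n ?v + QK n K *\<^sub>v (P u *\<^sub>v (u - y))" using L2(2) K(1) d2e by auto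
      have yD': "pmat n \<tau> *\<^sub>v y \<in> Dset n" using yD PP by simp
      have S1: "Srho n \<rho> u = transpose_mat (P u) *\<^sub>v projD n ?v2"
        unfolding \<tau>(2) by (rule Srho_red[OF \<tau>(1) u uD]) (use rho in simp)
      have S2: "Srho n \<rho> y = transpose_mat (P u) *\<^sub>v projD n ?v"
      proof -
        have "Srho n \<rho> y = transpose_mat (pmat n \<tau>) *\<^sub>v projD n (pmat n \<tau> *\<^sub>v y - ?w)"
          by (rule Srho_red[OF \<tau>(1) y yD']) (use rho in simp)
        then show ?thesis unfolding PP \<tau>(2) \<sigma>(2) .
      qed
      have xc: "projD n ?v \<in> carrier_vec n" by (rule proj_carrier[OF vc])
      have qc: "QK n K *\<^sub>v (P u *\<^sub>v (u - y)) \<in> carrier_vec n" using Qc unfolding \<tau>(2) by simp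
      have TPc: "transpose_mat (P u) \<in> carrier_mat n n" unfolding \<tau>(2) by simp
      have "Srho n \<rho> u = transpose_mat (P u) *\<^sub>v projD n ?v + transpose_mat (P u) *\<^sub>v (QK n K *\<^sub>v (P u *\<^sub>v (u - y)))"
        unfolding S1 pr by (rule mult_add_distrib_mat_vec[OF TPc xc qc])
      also have "transpose_mat (P u) *\<^sub>v (QK n K *\<^sub>v (P u *\<^sub>v (u - y))) = Q *\<^sub>v (u - y)"
      proof -
        have Puc: "P u \<in> carrier_mat n n" unfolding \<tau>(2) by simp
        have "Q *\<^sub>v (u - y) = (transpose_mat (P u) * QK n K) *\<^sub>v (P u *\<^sub>v (u - y))"
          unfolding Qh(1) K(2) by (rule assoc_mult_mat_vec[of _ n n _ n]) (use TPc Qc Puc uyc in auto)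
        also have "\<dots> = transpose_mat (P u) *\<^sub>v (QK n K *\<^sub>v (P u *\<^sub>v (u - y)))"
          by (rule assoc_mult_mat_vec[of _ n n _ n]) (use TPc Qc Puc uyc in auto)
        finally show ?thesis by simp
      qed
      finally show ?thesis unfolding S2 .
    qed
  qed
qed


end
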